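(* Let $\alpha\in(\tfrac12,1)$, $z=(t',x')\in\mathbb{R}\times\mathbb{R}^d$, and let $f:\mathbb{R}\times\mathbb{R}^d\to\mathbb{R}$ be spatially differentiable with $[\nabla f]_\alpha<\infty$ (and such that the spatially mollified functions below are differentiable in time). Then $$\sup_{r>0}\frac{1}{r^{2\alpha}}\inf_{B,b}\|\nabla f-B_{x'}\|_{P_r(z)}\le C\Big(\sup_{l>0}\frac{1}{l^{2\alpha}}\sup_{|y|\le l}\inf_{k\in\mathbb{R}^d}\|\nabla\delta_yf-k\|_{P_l(z)}+\sum_{i=0}^d\sup_{r>0}r^{1-2\alpha}\sup_{|y|\le r}\big\|\partial_t(\delta_yf)_{r,i}\big\|_{P_r(z)}\Big),$$ where the infimum is over symmetric $B\in\mathbb{R}^{d\times d}$ and $b\in\mathbb{R}^d$, $B_{x'}(x):=B(x-x')+b$, and $C$ depends only on $d$ and $\alpha$.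
   Context: Metric $d((t,x),(t',x'))=|t-t'|^{1/2}+|x-x'|$, $[f]_\alpha:=\sup_{z\ne z'}|f(z)-f(z')|/d^\alpha(z,z')$. $P_r(z):=(t'-r^2,t')\times B_r(x')$ is the parabolic cylinder, $\|\cdot\|_{P_r(z)}$ the supremum norm over it. $\delta_yf(t,x):=f(t,x+y)-f(t,x)$. $\psi$ is a fixed smooth, nonnegative, radially symmetric mollifier on $\mathbb{R}^d$ with $\operatorname{supp}\psi\subset B_1(0)$ and $\int\psi=1$; $\psi_r(x):=r^{-d}\psi(x/r)$. For a function $g$ on $\mathbb{R}\times\mathbb{R}^d$, convolution is in space only: $g_{r,0}:=g*\psi_r$ and $g_{r,i}:=g*(\partial_i\psi)_r$ for $i=1,\dots,d$, where $(\partial_i\psi)_r(x)=r^{-d}(\partial_i\psi)(x/r)$. *)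

theory Defs
  imports "HOL-Analysis.Analysis"
begin

definition pdist :: "real \<times> (real^'n) \<Rightarrow> real \<times> (real^'n) \<Rightarrow> real" where
  "pdist z w = sqrt \<bar>fst z - fst w\<bar> + norm (snd z - snd w)"

definition Pcyl :: "real \<Rightarrow> real \<times> (real^'n) \<Rightarrow> (real \<times> (real^'n)) set" where
  "Pcyl r z = {(s, y). fst z - r\<^sup>2 < s \<and> s < fst z \<and> dist y (snd z) < r}"

definition supn :: "('a \<Rightarrow> 'b::real_normed_vector) \<Rightarrow> 'a set \<Rightarrow> ereal" where
  "supn g S = (SUP p\<in>S. ereal (norm (g p)))"

definition pder :: "(real^'n \<Rightarrow> real) \<Rightarrow> 'n \<Rightarrow> real^'n \<Rightarrow> real" where
  "pder g i x = frechet_derivative g (at x) (axis i 1)"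

definition grad :: "(real^'n \<Rightarrow> real) \<Rightarrow> real^'n \<Rightarrow> real^'n" where
  "grad g x = (\<chi> i. pder g i x)"

fun iter_pder :: "'n list \<Rightarrow> (real^'n \<Rightarrow> real) \<Rightarrow> real^'n \<Rightarrow> real" where
  "iter_pder [] g = g"
| "iter_pder (i # is) g = pder (iter_pder is g) i"

definition smooth_fun :: "(real^'n \<Rightarrow> real) \<Rightarrow> bool" where
  "smooth_fun g \<longleftrightarrow> (\<forall>is x. iter_pder is g differentiable (at x))"

definition mollifier :: "(real^'n \<Rightarrow> real) \<Rightarrow> bool" where
  "mollifier \<psi> \<longleftrightarrow> smooth_fun \<psi> \<and> (\<forall>x. 0 \<le> \<psi> x)
     \<and> (\<forall>x y. norm x = norm y \<longrightarrow> \<psi> x = \<psi> y)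
     \<and> closure {x. \<psi> x \<noteq> 0} \<subseteq> ball 0 1
     \<and> \<psi> integrable_on UNIV \<and> integral UNIV \<psi> = 1"

definition sdelta :: "real^'n \<Rightarrow> (real \<Rightarrow> real^'n \<Rightarrow> real) \<Rightarrow> real \<Rightarrow> real^'n \<Rightarrow> real" where
  "sdelta y f t x = f t (x + y) - f t x"

definition rescale :: "real \<Rightarrow> (real^'n \<Rightarrow> real) \<Rightarrow> real^'n \<Rightarrow> real" where
  "rescale r \<phi> x = inverse r ^ CARD('n) * \<phi> (inverse r *\<^sub>R x)"

definition sconv :: "(real \<Rightarrow> real^'n \<Rightarrow> real) \<Rightarrow> (real^'n \<Rightarrow> real) \<Rightarrow> real \<Rightarrow> real^'n \<Rightarrow> real" where
  "sconv g \<phi> t x = integral UNIV (\<lambda>w. g t (x - w) * \<phi> w)"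

text \<open>g_{r,0} = g * psi_r and g_{r,i} = g * (partial_i psi)_r.\<close>
definition moll0 :: "(real^'n \<Rightarrow> real) \<Rightarrow> real \<Rightarrow> (real \<Rightarrow> real^'n \<Rightarrow> real) \<Rightarrow> real \<Rightarrow> real^'n \<Rightarrow> real" where
  "moll0 \<psi> r g = sconv g (rescale r \<psi>)"

definition molli :: "(real^'n \<Rightarrow> real) \<Rightarrow> 'n \<Rightarrow> real \<Rightarrow> (real \<Rightarrow> real^'n \<Rightarrow> real) \<Rightarrow> real \<Rightarrow> real^'n \<Rightarrow> real" where
  "molli \<psi> i r g = sconv g (rescale r (pder \<psi> i))"

end

theory Submission
  imports Defs
begin


lemma grad_eqI:
  fixes g :: "real^'n \<Rightarrow> real"
  assumes "(g has_derivative (\<lambda>v. a \<bullet> v)) (at x)"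
  shows "grad g x = a"
proof -
  have "frechet_derivative g (at x) = (\<lambda>v. a \<bullet> v)"
    using frechet_derivative_at[OF assms] by simp
  then show ?thesis
    unfolding grad_def pder_def by (simp add: vec_eq_iff inner_axis)
qed

lemma grad_has_derivative:
  fixes g :: "real^'n \<Rightarrow> real"
  assumes "g differentiable (at x)"
  shows "(g has_derivative (\<lambda>v. grad g x \<bullet> v)) (at x)"
proof -
  let ?D = "frechet_derivative g (at x)"
  have d: "(g has_derivative ?D) (at x)" using assms frechet_derivative_works by blast
  then have lin: "linear ?D" using has_derivative_linear by blast
  have "?D v = grad g x \<bullet> v" for v
  proof -
    have ve: "v = (\<Sum>i\<in>UNIV. (v$i) *\<^sub>R axis i 1)"
      using basis_expansion[of v] by (simp add: scalar_mult_eq_scaleR)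
    have "?D v = ?D (\<Sum>i\<in>UNIV. (v$i) *\<^sub>R axis i 1)"
      using ve by (rule arg_cong)
    also have "\<dots> = (\<Sum>i\<in>UNIV. (v$i) * ?D (axis i 1))"
      by (simp add: linear_sum[OF lin] linear_scale[OF lin])
    also have "\<dots> = grad g x \<bullet> v"
      by (simp add: grad_def pder_def inner_vec_def mult.commute)
    finally show ?thesis .
  qed
  with d show ?thesis by (metis (no_types, lifting) ext)
qed



lemma grad_shift_diff:
  fixes g :: "real^'n \<Rightarrow> real"
  assumes "\<And>z. g differentiable (at z)"
  shows "grad (\<lambda>x. g (x + y) - g x) x = grad g (x + y) - grad g x"
proof (rule grad_eqI)
  have d1: "(g has_derivative (\<lambda>v. grad g (x+y) \<bullet> v)) (at (x + y))"
    using grad_has_derivative assms by blast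
  have d2: "((\<lambda>x. x + y) has_derivative (\<lambda>v. v)) (at x)"
    by (auto intro!: derivative_eq_intros)
  have "((\<lambda>x. g (x + y)) has_derivative (\<lambda>v. grad g (x+y) \<bullet> v)) (at x)"
    using has_derivative_compose[OF d2 d1] by simp
  from has_derivative_diff[OF this grad_has_derivative[OF assms]]
  show "((\<lambda>x. g (x + y) - g x) has_derivative (\<lambda>v. (grad g (x + y) - grad g x) \<bullet> v)) (at x)"
    by (simp add: inner_diff_left)
qed

lemma line_deriv:
  fixes g :: "real^'n \<Rightarrow> real"
  assumes "\<And>z. g differentiable (at z)"
  shows "((\<lambda>t. g (a + t *\<^sub>R e)) has_real_derivative (grad g (a + t *\<^sub>R e) \<bullet> e)) (at t)"
proof -
  have d1: "(g has_derivative (\<lambda>v. grad g (a + t *\<^sub>R e) \<bullet> v)) (at (a + t *\<^sub>R e))"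
    using grad_has_derivative assms by blast
  have d2: "((\<lambda>t. a + t *\<^sub>R e) has_derivative (\<lambda>s. s *\<^sub>R e)) (at t)"
    by (auto intro!: derivative_eq_intros)
  have "((\<lambda>t. g (a + t *\<^sub>R e)) has_derivative (\<lambda>s. grad g (a + t *\<^sub>R e) \<bullet> (s *\<^sub>R e))) (at t)"
    using has_derivative_compose[OF d2 d1] by simp
  moreover have "(\<lambda>s. grad g (a + t *\<^sub>R e) \<bullet> (s *\<^sub>R e)) = (*) (grad g (a + t *\<^sub>R e) \<bullet> e)"
    by (auto simp: fun_eq_iff)
  ultimately show ?thesis
    by (simp add: has_field_derivative_def)
qed

lemma bound1D:
  fixes \<phi> \<phi>' :: "real \<Rightarrow> real"
  assumes "0 \<le> h" and "\<And>t. t \<in> {0..h} \<Longrightarrow> (\<phi> has_real_derivative \<phi>' t) (at t)"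
    and "\<And>t. t \<in> {0..h} \<Longrightarrow> \<bar>\<phi>' t\<bar> \<le> K"
  shows "\<bar>\<phi> h - \<phi> 0\<bar> \<le> K * h"
proof -
  have "norm (\<phi> h - \<phi> 0) \<le> K * norm (h - 0)"
    by (rule field_differentiable_bound[of "{0..h}" \<phi> \<phi>'])
       (use assms in \<open>auto intro: has_field_derivative_at_within\<close>)
  then show ?thesis using assms(1) by simp
qed

lemma central_diff:
  fixes F :: "real^'n \<Rightarrow> real"
  assumes dF: "\<And>z. (F has_derivative (\<lambda>v. Gr z \<bullet> v)) (at z)"
    and h: "0 \<le> h"
    and K: "\<And>t. t \<in> {0..h} \<Longrightarrow> norm (Gr (x + t *\<^sub>R e) + Gr (x - t *\<^sub>R e) - 2 *\<^sub>R Gr x) \<le> K"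
  shows "\<bar>F (x + h *\<^sub>R e) - F (x - h *\<^sub>R e) - 2 * h * (Gr x \<bullet> e)\<bar> \<le> K * norm e * h"
proof -
  have dif: "\<And>z. F differentiable (at z)" using dF differentiable_def by blast
  have gr: "grad F z = Gr z" for z using grad_eqI dF by blast
  define \<phi> where "\<phi> t = F (x + t *\<^sub>R e) - F (x + t *\<^sub>R (-e)) - 2 * t * (Gr x \<bullet> e)" for t
  have "(\<phi> has_real_derivative ((Gr (x + t *\<^sub>R e) + Gr (x - t *\<^sub>R e) - 2 *\<^sub>R Gr x) \<bullet> e)) (at t)" for t
  proof -
    have l3: "((\<lambda>t. 2 * t * (Gr x \<bullet> e)) has_real_derivative 2 * (Gr x \<bullet> e)) (at t)"
      by (auto intro!: derivative_eq_intros)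
    have "(\<phi> has_real_derivative (grad F (x + t *\<^sub>R e) \<bullet> e - grad F (x + t *\<^sub>R (-e)) \<bullet> (-e) - 2 * (Gr x \<bullet> e))) (at t)"
      unfolding \<phi>_def
      by (rule DERIV_diff[OF DERIV_diff[OF line_deriv[OF dif] line_deriv[OF dif]] l3])
    then show ?thesis by (simp add: gr inner_diff_left inner_add_left algebra_simps)
  qed
  then have "\<bar>\<phi> h - \<phi> 0\<bar> \<le> (K * norm e) * h"
    apply (rule bound1D[OF h])
    by (meson Cauchy_Schwarz_ineq2 K dual_order.trans mult_right_mono norm_ge_zero)
  then show ?thesis by (simp add: \<phi>_def)
qed

lemma sym_diff:
  fixes F :: "real^'n \<Rightarrow> real"
  assumes dF: "\<And>z. (F has_derivative (\<lambda>v. Gr z \<bullet> v)) (at z)"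
    and K: "\<And>t. t \<in> {0..1} \<Longrightarrow> norm (Gr (x + t *\<^sub>R w) - Gr (x - t *\<^sub>R w)) \<le> K"
  shows "\<bar>F (x + w) + F (x - w) - 2 * F x\<bar> \<le> K * norm w"
proof -
  have dif: "\<And>z. F differentiable (at z)" using dF differentiable_def by blast
  have gr: "grad F z = Gr z" for z using grad_eqI dF by blast
  define \<phi> where "\<phi> t = F (x + t *\<^sub>R w) + F (x + t *\<^sub>R (-w)) - 2 * F x" for t
  have "(\<phi> has_real_derivative ((Gr (x + t *\<^sub>R w) - Gr (x - t *\<^sub>R w)) \<bullet> w)) (at t)" for t
  proof -
    have "(\<phi> has_real_derivative (grad F (x + t *\<^sub>R w) \<bullet> w + grad F (x + t *\<^sub>R (-w)) \<bullet> (-w) - 0)) (at t)"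
      unfolding \<phi>_def
      by (rule DERIV_diff[OF DERIV_add[OF line_deriv[OF dif] line_deriv[OF dif]] DERIV_const])
    then show ?thesis by (simp add: gr inner_diff_left algebra_simps)
  qed
  then have "\<bar>\<phi> 1 - \<phi> 0\<bar> \<le> (K * norm w) * 1"
    apply (rule bound1D[OF zero_le_one])
    by (meson Cauchy_Schwarz_ineq2 K atLeastAtMost_iff dual_order.trans mult_right_mono norm_ge_zero)
  then show ?thesis by (simp add: \<phi>_def)
qed

lemma mixed_diff:
  fixes F :: "real^'n \<Rightarrow> real"
  assumes dF: "\<And>z. (F has_derivative (\<lambda>v. Gr z \<bullet> v)) (at z)"
    and K: "\<And>t. t \<in> {0..1} \<Longrightarrow> norm (Gr (p + t *\<^sub>R v) - Gr (q + t *\<^sub>R v) - (Gr p - Gr q)) \<le> K"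
  shows "\<bar>F (p + v) - F (q + v) - F p + F q - (Gr p - Gr q) \<bullet> v\<bar> \<le> K * norm v"
proof -
  have dif: "\<And>z. F differentiable (at z)" using dF differentiable_def by blast
  have gr: "grad F z = Gr z" for z using grad_eqI dF by blast
  define \<phi> where "\<phi> t = F (p + t *\<^sub>R v) - F (q + t *\<^sub>R v) - t * ((Gr p - Gr q) \<bullet> v)" for t
  have "(\<phi> has_real_derivative ((Gr (p + t *\<^sub>R v) - Gr (q + t *\<^sub>R v) - (Gr p - Gr q)) \<bullet> v)) (at t)" for t
  proof -
    have l3: "((\<lambda>t. t * ((Gr p - Gr q) \<bullet> v)) has_real_derivative ((Gr p - Gr q) \<bullet> v)) (at t)"
      by (auto intro!: derivative_eq_intros)
    have "(\<phi> has_real_derivative (grad F (p + t *\<^sub>R v) \<bullet> v - grad F (q + t *\<^sub>R v) \<bullet> v - ((Gr p - Gr q) \<bullet> v))) (at t)"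
      unfolding \<phi>_def
      by (rule DERIV_diff[OF DERIV_diff[OF line_deriv[OF dif] line_deriv[OF dif]] l3])
    then show ?thesis by (simp add: gr inner_diff_left algebra_simps)
  qed
  then have "\<bar>\<phi> 1 - \<phi> 0\<bar> \<le> (K * norm v) * 1"
    apply (rule bound1D[OF zero_le_one, of \<phi> "\<lambda>t. (Gr (p + t *\<^sub>R v) - Gr (q + t *\<^sub>R v) - (Gr p - Gr q)) \<bullet> v"])
    by (meson Cauchy_Schwarz_ineq2 K atLeastAtMost_iff dual_order.trans mult_right_mono norm_ge_zero)
  then show ?thesis by (simp add: \<phi>_def algebra_simps)
qed



lemma moll_parts:
  assumes "mollifier \<psi>"
  shows "smooth_fun \<psi>" "\<And>x. 0 \<le> \<psi> x" "\<And>x y. norm x = norm y \<Longrightarrow> \<psi> x = \<psi> y"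
    "closure {x. \<psi> x \<noteq> 0} \<subseteq> ball 0 1" "\<psi> integrable_on UNIV" "integral UNIV \<psi> = 1"
  using assms unfolding mollifier_def by (elim conjE; blast)+

lemma moll_cont: assumes "mollifier \<psi>" shows "continuous_on UNIV \<psi>"
proof -
  have "\<psi> differentiable (at x)" for x
  proof -
    have "iter_pder [] \<psi> differentiable (at x)" using moll_parts(1)[OF assms] unfolding smooth_fun_def by blast
    then show ?thesis by simp
  qed
  then show ?thesis
    by (simp add: continuous_at_imp_continuous_on differentiable_imp_continuous_within)
qed

lemma moll_supp: assumes "mollifier \<psi>" "\<psi> x \<noteq> 0" shows "norm x < 1"
proof -
  have "x \<in> closure {x. \<psi> x \<noteq> 0}" by (rule closure_subset[THEN subsetD]) (simp add: assms(2))
  then have "x \<in> ball 0 1" by (rule subsetD[OF moll_parts(4)[OF assms(1)]])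
  then show ?thesis by (simp add: dist_norm)
qed

lemma moll_nonneg: assumes "mollifier \<psi>" shows "0 \<le> \<psi> x"
  using moll_parts(2)[OF assms] .

lemma moll_even: assumes "mollifier \<psi>" shows "\<psi> (-x) = \<psi> x"
  by (rule moll_parts(3)[OF assms]) (rule norm_minus_cancel)

lemma moll_int: assumes "mollifier \<psi>" shows "(\<psi> has_integral 1) UNIV"
  using integrable_integral[OF moll_parts(5)[OF assms]] moll_parts(6)[OF assms] by simp

lemma ball_sub_cube:
  fixes w :: "real^'n"
  assumes "norm w < \<rho>"
  shows "w \<in> cbox (-(\<rho> *\<^sub>R One)) (\<rho> *\<^sub>R One)"
proof -
  have "\<bar>w \<bullet> b\<bar> \<le> \<rho>" if "b \<in> Basis" for b using Basis_le_norm[OF that, of w] assms by linarith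
  then show ?thesis by (fastforce simp: mem_box abs_le_iff inner_minus_left minus_le_iff)
qed

lemma has_integral_cube_UNIV:
  fixes h :: "real^'n \<Rightarrow> real"
  assumes "\<And>w. h w \<noteq> 0 \<Longrightarrow> norm w < \<rho>"
    and "(h has_integral i) (cbox (-(\<rho> *\<^sub>R One)) (\<rho> *\<^sub>R One))"
  shows "(h has_integral i) UNIV"
proof -
  have "(\<lambda>x. if x \<in> cbox (-(\<rho> *\<^sub>R One)) (\<rho> *\<^sub>R One) then h x else 0) = h"
  proof
    fix x show "(if x \<in> cbox (-(\<rho> *\<^sub>R One)) (\<rho> *\<^sub>R One) then h x else 0) = h x"
      using assms(1)[of x] ball_sub_cube[of x \<rho>] by (cases "h x = 0") auto
  qed
  then show ?thesis using has_integral_restrict_UNIV[of "cbox (-(\<rho> *\<^sub>R One)) (\<rho> *\<^sub>R One)" h i] assms(2) by simp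
qed

lemma has_integral_UNIV_cube:
  fixes h :: "real^'n \<Rightarrow> real"
  assumes "\<And>w. h w \<noteq> 0 \<Longrightarrow> norm w < \<rho>"
    and "(h has_integral i) UNIV"
  shows "(h has_integral i) (cbox (-(\<rho> *\<^sub>R One)) (\<rho> *\<^sub>R One))"
proof -
  have "(\<lambda>x. if x \<in> cbox (-(\<rho> *\<^sub>R One)) (\<rho> *\<^sub>R One) then h x else 0) = h"
  proof
    fix x show "(if x \<in> cbox (-(\<rho> *\<^sub>R One)) (\<rho> *\<^sub>R One) then h x else 0) = h x"
      using assms(1)[of x] ball_sub_cube[of x \<rho>] by (cases "h x = 0") auto
  qed
  then show ?thesis using has_integral_restrict_UNIV[of "cbox (-(\<rho> *\<^sub>R One)) (\<rho> *\<^sub>R One)" h i] assms(2) by simp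
qed

context
  fixes \<psi> :: "real^'n \<Rightarrow> real" and \<rho> :: real
  assumes moll: "mollifier \<psi>" and rho: "0 < \<rho>"
begin

lemma resc_cont: "continuous_on UNIV (rescale \<rho> \<psi>)"
proof -
  have c1: "continuous_on UNIV (\<lambda>x::real^'n. inverse \<rho> *\<^sub>R x)"
    by (intro continuous_on_scaleR continuous_on_const continuous_on_id)
  have "continuous_on UNIV (\<lambda>x. \<psi> (inverse \<rho> *\<^sub>R x))"
    using continuous_on_compose2[OF moll_cont[OF moll] c1] by simp
  then have "continuous_on UNIV (\<lambda>x. inverse \<rho> ^ CARD('n) * \<psi> (inverse \<rho> *\<^sub>R x))"
    by (rule continuous_on_mult[OF continuous_on_const])
  then show ?thesis unfolding rescale_def[abs_def] .
qed

lemma resc_supp: "rescale \<rho> \<psi> w \<noteq> 0 \<Longrightarrow> norm w < \<rho>"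
proof -
  assume "rescale \<rho> \<psi> w \<noteq> 0"
  then have "\<psi> (inverse \<rho> *\<^sub>R w) \<noteq> 0" by (simp add: rescale_def)
  then have "norm (inverse \<rho> *\<^sub>R w) < 1" by (rule moll_supp[OF moll])
  then show "norm w < \<rho>" using rho by (simp add: field_simps)
qed

lemma resc_nonneg: "0 \<le> rescale \<rho> \<psi> w"
  unfolding rescale_def using moll_nonneg[OF moll] rho by simp

lemma resc_even: "rescale \<rho> \<psi> (-w) = rescale \<rho> \<psi> w"
  unfolding rescale_def by (simp add: moll_even[OF moll])

lemma resc_int: "(rescale \<rho> \<psi> has_integral 1) UNIV"
proof -
  have "(\<psi> has_integral 1) (cbox (-(1 *\<^sub>R One)) (1 *\<^sub>R One))"
    by (rule has_integral_UNIV_cube[of \<psi> 1 1, OF moll_supp[OF moll] moll_int[OF moll]])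
  then have i1: "(\<psi> has_integral 1) (cbox (-One) One)" by simp
  have "((\<lambda>x. \<psi> (inverse \<rho> *\<^sub>R x + 0)) has_integral (1 /\<^sub>R (inverse \<rho>) ^ DIM(real^'n)))
           (cbox ((-One - 0) /\<^sub>R (inverse \<rho>)) ((One - 0) /\<^sub>R (inverse \<rho>)))"
    by (rule has_integral_affinity'[OF i1]) (use rho in simp)
  then have "((\<lambda>x. \<psi> (inverse \<rho> *\<^sub>R x)) has_integral \<rho> ^ CARD('n))
           (cbox (-(\<rho> *\<^sub>R One)) (\<rho> *\<^sub>R One))"
    using rho by (simp add: power_inverse)
  then have "((\<lambda>x. inverse \<rho> ^ CARD('n) * \<psi> (inverse \<rho> *\<^sub>R x)) has_integral
        inverse \<rho> ^ CARD('n) * \<rho> ^ CARD('n)) (cbox (-(\<rho> *\<^sub>R One)) (\<rho> *\<^sub>R One))"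
    by (rule has_integral_mult_right)
  then have "(rescale \<rho> \<psi> has_integral 1) (cbox (-(\<rho> *\<^sub>R One)) (\<rho> *\<^sub>R One))"
    using rho by (simp add: rescale_def[abs_def] power_inverse field_simps)
  then show ?thesis by (rule has_integral_cube_UNIV[OF resc_supp, rotated])
qed

lemma conv_has_integral:
  assumes "continuous_on UNIV g"
  shows "((\<lambda>w. g w * rescale \<rho> \<psi> w) has_integral
          integral (cbox (-(\<rho> *\<^sub>R One)) (\<rho> *\<^sub>R One)) (\<lambda>w. g w * rescale \<rho> \<psi> w)) UNIV"
proof (rule has_integral_cube_UNIV)
  show "g w * rescale \<rho> \<psi> w \<noteq> 0 \<Longrightarrow> norm w < \<rho>" for w using resc_supp by auto
  have "continuous_on UNIV (\<lambda>w. g w * rescale \<rho> \<psi> w)"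
    using assms resc_cont by (intro continuous_intros) auto
  then have "(\<lambda>w. g w * rescale \<rho> \<psi> w) integrable_on cbox (-(\<rho> *\<^sub>R One)) (\<rho> *\<^sub>R One)"
    by (rule integrable_continuous[OF continuous_on_subset[OF _ subset_UNIV]])
  then show "((\<lambda>w. g w * rescale \<rho> \<psi> w) has_integral
          integral (cbox (-(\<rho> *\<^sub>R One)) (\<rho> *\<^sub>R One)) (\<lambda>w. g w * rescale \<rho> \<psi> w))
          (cbox (-(\<rho> *\<^sub>R One)) (\<rho> *\<^sub>R One))"
    by (simp add: integrable_integral)
qed

lemma conv_integrable:
  assumes "continuous_on UNIV g"
  shows "(\<lambda>w. g w * rescale \<rho> \<psi> w) integrable_on UNIV"
  using conv_has_integral[OF assms] by blast

lemma conv_bound: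
  assumes "continuous_on UNIV g" and "\<And>w. norm w < \<rho> \<Longrightarrow> \<bar>g w - c\<bar> \<le> K"
  shows "\<bar>integral UNIV (\<lambda>w. g w * rescale \<rho> \<psi> w) - c\<bar> \<le> K"
proof -
  let ?\<phi> = "rescale \<rho> \<psi>"
  have ic: "((\<lambda>w. c * ?\<phi> w) has_integral c) UNIV"
    using has_integral_mult_right[OF resc_int, of c] by simp
  have gi: "(\<lambda>w. g w * ?\<phi> w) integrable_on UNIV" by (rule conv_integrable[OF assms(1)])
  have ci: "(\<lambda>w. c * ?\<phi> w) integrable_on UNIV" using ic by (rule has_integral_integrable)
  have e1: "integral UNIV (\<lambda>w. g w * ?\<phi> w - c * ?\<phi> w) = integral UNIV (\<lambda>w. g w * ?\<phi> w) - c"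
    using integral_diff[OF gi ci] integral_unique[OF ic] by simp
  have fe: "(\<lambda>w. g w * ?\<phi> w - c * ?\<phi> w) = (\<lambda>w. (g w - c) * ?\<phi> w)"
    by (rule ext) (simp only: left_diff_distrib)
  have eq: "integral UNIV (\<lambda>w. g w * ?\<phi> w) - c = integral UNIV (\<lambda>w. (g w - c) * ?\<phi> w)"
    using e1 fe by simp
  have di: "(\<lambda>w. (g w - c) * ?\<phi> w) integrable_on UNIV"
    using integrable_diff[OF gi ci] fe by simp
  have Ki: "((\<lambda>w. K * ?\<phi> w) has_integral K) UNIV"
    using has_integral_mult_right[OF resc_int, of K] by simp
  have Kint: "(\<lambda>w. K * ?\<phi> w) integrable_on UNIV" using Ki by (rule has_integral_integrable)
  have pt: "\<bar>(g w - c) * ?\<phi> w\<bar> \<le> K * ?\<phi> w" for w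
  proof (cases "?\<phi> w = 0")
    case False
    then have "norm w < \<rho>" using resc_supp by blast
    then have "\<bar>g w - c\<bar> * ?\<phi> w \<le> K * ?\<phi> w"
      by (rule mult_right_mono[OF assms(2) resc_nonneg])
    then show ?thesis by (simp add: abs_mult abs_of_nonneg[OF resc_nonneg])
  qed simp
  have "integral UNIV (\<lambda>w. (g w - c) * ?\<phi> w) \<le> integral UNIV (\<lambda>w. K * ?\<phi> w)"
    by (rule integral_le[OF di Kint]) (rule abs_le_D1[OF pt])
  then have u: "integral UNIV (\<lambda>w. (g w - c) * ?\<phi> w) \<le> K" using integral_unique[OF Ki] integral_unique[OF resc_int] by simp
  have "integral UNIV (\<lambda>w. - (K * ?\<phi> w)) \<le> integral UNIV (\<lambda>w. (g w - c) * ?\<phi> w)"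
    by (rule integral_le[OF integrable_neg[OF Kint] di]) (use abs_le_D2[OF pt] in \<open>simp add: minus_le_iff\<close>)
  then have l: "- K \<le> integral UNIV (\<lambda>w. (g w - c) * ?\<phi> w)"
    using integral_neg integral_unique[OF Ki] integral_unique[OF resc_int] by simp
  show ?thesis using u l eq by linarith
qed

lemma conv_reflect:
  assumes "continuous_on UNIV g"
  shows "integral UNIV (\<lambda>w. g (-w) * rescale \<rho> \<psi> w) = integral UNIV (\<lambda>w. g w * rescale \<rho> \<psi> w)"
proof -
  let ?Q = "cbox (-(\<rho> *\<^sub>R One)) (\<rho> *\<^sub>R One)"
  let ?h = "\<lambda>w. g w * rescale \<rho> \<psi> w"
  have nz: "?h w \<noteq> 0 \<Longrightarrow> norm w < \<rho>" for w using resc_supp by auto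
  have nz2: "?h (-w) \<noteq> 0 \<Longrightarrow> norm w < \<rho>" for w using nz[of "-w"] by simp
  have h: "(?h has_integral integral ?Q ?h) UNIV" by (rule conv_has_integral[OF assms])
  have hQ: "(?h has_integral integral ?Q ?h) ?Q"
    by (rule has_integral_UNIV_cube[OF nz h])
  have R: "((\<lambda>x. ?h (-x)) has_integral integral ?Q ?h) (cbox (-(\<rho> *\<^sub>R One)) (-(-(\<rho> *\<^sub>R One))))
     = (?h has_integral integral ?Q ?h) (cbox (-(\<rho> *\<^sub>R One)) (\<rho> *\<^sub>R One))"
    by (rule has_integral_reflect)
  have hQ': "((\<lambda>x. ?h (-x)) has_integral integral ?Q ?h) ?Q" using R hQ by simp
  have "((\<lambda>x. ?h (-x)) has_integral integral ?Q ?h) UNIV"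
  proof (rule has_integral_cube_UNIV[of _ \<rho>])
    show "?h (-w) \<noteq> 0 \<Longrightarrow> norm w < \<rho>" for w by (rule nz2)
    show "((\<lambda>x. ?h (-x)) has_integral integral ?Q ?h) ?Q" by (rule hQ')
  qed
  moreover have "(\<lambda>x. ?h (-x)) = (\<lambda>w. g (-w) * rescale \<rho> \<psi> w)"
    by (rule ext) (simp only: resc_even)
  ultimately have "((\<lambda>w. g (-w) * rescale \<rho> \<psi> w) has_integral integral ?Q ?h) UNIV" by simp
  then show ?thesis using integral_unique[OF h] integral_unique by simp
qed

end



lemma ereal_mult_le_imp:
  assumes "0 < a" "ereal a * X \<le> ereal b"
  shows "X \<le> ereal (b / a)"
proof (cases X)
  case (real x)
  then have "a * x \<le> b" using assms by simp
  then show ?thesis using real assms(1) by (simp add: pos_le_divide_eq mult.commute)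
next
  case PInf
  then show ?thesis using assms by simp
next
  case MInf
  then show ?thesis by simp
qed

lemma dist_add_le: "dist (x + v) x0 \<le> dist x x0 + norm (v::'a::real_normed_vector)"
  by (metis dist_norm add.commute add_diff_eq norm_triangle_ineq diff_add_eq)

lemma dist_sub_le: "dist (x - v) x0 \<le> dist x x0 + norm (v::'a::real_normed_vector)"
  using dist_add_le[of x "-v" x0] by simp

lemma shift_deriv:
  fixes D :: "real^'n \<Rightarrow> real"
  assumes dD: "\<And>z. (D has_derivative (\<lambda>v. Gr z \<bullet> v)) (at z)"
  shows "((\<lambda>z. D (z + y) - D z) has_derivative (\<lambda>v. (Gr (z + y) - Gr z) \<bullet> v)) (at z)"
proof -
  have d2: "((\<lambda>x. x + y) has_derivative (\<lambda>v. v)) (at z)"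
    by (auto intro!: derivative_eq_intros)
  have "((\<lambda>x. D (x + y)) has_derivative (\<lambda>v. Gr (z+y) \<bullet> v)) (at z)"
    using has_derivative_compose[OF d2 dD] by simp
  from has_derivative_diff[OF this dD]
  show ?thesis by (simp add: inner_diff_left)
qed

lemma time_bound:
  fixes m :: "real \<Rightarrow> real"
  assumes "\<And>t. m differentiable (at t)"
    and "\<And>\<sigma>. min s s' \<le> \<sigma> \<Longrightarrow> \<sigma> \<le> max s s' \<Longrightarrow> \<bar>deriv m \<sigma>\<bar> \<le> Bd"
  shows "\<bar>m s - m s'\<bar> \<le> Bd * \<bar>s - s'\<bar>"
proof -
  have "norm (m s - m s') \<le> Bd * norm (s - s')"
  proof (rule field_differentiable_bound[of "{min s s'..max s s'}" m "deriv m"])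
    show "convex {min s s'..max s s'}" by (rule convex_real_interval)
    show "(m has_field_derivative deriv m z) (at z within {min s s'..max s s'})" for z
      using assms(1) DERIV_deriv_iff_real_differentiable has_field_derivative_at_within by blast
    show "norm (deriv m z) \<le> Bd" if "z \<in> {min s s'..max s s'}" for z
      using assms(2) that by simp
  qed auto
  then show ?thesis by simp
qed




lemma cen_from_SD:
  fixes F :: "real^'n \<Rightarrow> real"
  assumes dF: "\<And>z. (F has_derivative (\<lambda>v. Gr z \<bullet> v)) (at z)"
    and SD: "\<And>a b y. dist a x0 < 4*r \<Longrightarrow> dist b x0 < 4*r \<Longrightarrow> norm y \<le> 4*r \<Longrightarrow>
               norm (Gr (a + y) - Gr a - (Gr (b + y) - Gr b)) \<le> \<epsilon>"
    and r: "0 < r" and x: "dist x x0 \<le> 2*r" and e: "norm e = 1"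
  shows "\<bar>F (x + r *\<^sub>R e) - F (x - r *\<^sub>R e) - 2 * r * (Gr x \<bullet> e)\<bar> \<le> \<epsilon> * r"
proof -
  have "\<bar>F (x + r *\<^sub>R e) - F (x - r *\<^sub>R e) - 2 * r * (Gr x \<bullet> e)\<bar> \<le> \<epsilon> * norm e * r"
  proof (rule central_diff[OF dF])
    show "0 \<le> r" using r by simp
    fix t assume t: "t \<in> {0..r}"
    have nt: "norm (t *\<^sub>R e) = t" using t e by simp
    have eq: "Gr (x + t *\<^sub>R e) + Gr (x - t *\<^sub>R e) - 2 *\<^sub>R Gr x
        = Gr (x + t *\<^sub>R e) - Gr x - (Gr ((x - t *\<^sub>R e) + t *\<^sub>R e) - Gr (x - t *\<^sub>R e))"
      by (simp add: scaleR_2 algebra_simps)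
    have "dist (x - t *\<^sub>R e) x0 \<le> dist x x0 + norm (t *\<^sub>R e)" by (rule dist_sub_le)
    then have d2: "dist (x - t *\<^sub>R e) x0 < 4*r" using x nt t r by auto
    show "norm (Gr (x + t *\<^sub>R e) + Gr (x - t *\<^sub>R e) - 2 *\<^sub>R Gr x) \<le> \<epsilon>"
      unfolding eq by (rule SD) (use x r d2 nt t in auto)
  qed
  then show ?thesis using e by simp
qed

lemma mixed_from_SD:
  fixes F :: "real^'n \<Rightarrow> real"
  assumes dF: "\<And>z. (F has_derivative (\<lambda>v. Gr z \<bullet> v)) (at z)"
    and SD: "\<And>a b y. dist a x0 < 4*r \<Longrightarrow> dist b x0 < 4*r \<Longrightarrow> norm y \<le> 4*r \<Longrightarrow>
               norm (Gr (a + y) - Gr a - (Gr (b + y) - Gr b)) \<le> \<epsilon>"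
    and r: "0 < r" and e: "norm e = 1" and v: "norm v < r"
  shows "\<bar>F (x0 + r *\<^sub>R e + v) - F (x0 - r *\<^sub>R e + v) - F (x0 + r *\<^sub>R e) + F (x0 - r *\<^sub>R e)
          - (Gr (x0 + r *\<^sub>R e) - Gr (x0 - r *\<^sub>R e)) \<bullet> v\<bar> \<le> \<epsilon> * norm v"
proof (rule mixed_diff[OF dF])
  fix t assume t: "t \<in> {0..1::real}"
  let ?p = "x0 + r *\<^sub>R e" and ?q = "x0 - r *\<^sub>R e"
  have eq: "Gr (?p + t *\<^sub>R v) - Gr (?q + t *\<^sub>R v) - (Gr ?p - Gr ?q)
     = Gr ((?q + t *\<^sub>R v) + (?p - ?q)) - Gr (?q + t *\<^sub>R v) - (Gr (?q + (?p - ?q)) - Gr ?q)"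
  proof -
    have a1: "(?q + t *\<^sub>R v) + (?p - ?q) = ?p + t *\<^sub>R v" by (simp add: algebra_simps)
    have a2: "?q + (?p - ?q) = ?p" by (simp add: algebra_simps)
    show ?thesis by (simp only: a1 a2)
  qed
  have dq: "dist ?q x0 = r" using r e by (simp add: dist_norm)
  have ntv: "norm (t *\<^sub>R v) \<le> norm v" using t by (simp add: mult_left_le_one_le)
  have "dist (?q + t *\<^sub>R v) x0 \<le> dist ?q x0 + norm (t *\<^sub>R v)" by (rule dist_add_le)
  then have d1: "dist (?q + t *\<^sub>R v) x0 < 4*r" using dq ntv v r by linarith
  have npq: "norm (?p - ?q) = 2 * r" using r e by (simp add: scaleR_2[symmetric] algebra_simps)
  show "norm (Gr (?p + t *\<^sub>R v) - Gr (?q + t *\<^sub>R v) - (Gr ?p - Gr ?q)) \<le> \<epsilon>"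
    unfolding eq by (rule SD) (use d1 dq npq r in auto)
qed

lemma sum_abs_bound:
  fixes a b :: "'n::finite \<Rightarrow> real"
  assumes "\<And>i. \<bar>a i\<bar> \<le> K" "\<And>i. \<bar>b i\<bar> \<le> L"
  shows "\<bar>\<Sum>i\<in>UNIV. a i * b i\<bar> \<le> real CARD('n) * (K * L)"
proof -
  have "\<bar>\<Sum>i\<in>UNIV. a i * b i\<bar> \<le> (\<Sum>i\<in>UNIV. \<bar>a i * b i\<bar>)" by (rule sum_abs)
  also have "\<dots> \<le> (\<Sum>i\<in>(UNIV::'n set). K * L)"
    by (rule sum_mono) (simp add: abs_mult mult_mono' assms)
  finally show ?thesis by simp
qed

lemma norm_le_comp_bound:
  fixes z :: "real^'n"
  assumes "\<And>j. \<bar>z$j\<bar> \<le> K"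
  shows "norm z \<le> real CARD('n) * K"
proof -
  have "norm z \<le> (\<Sum>j\<in>UNIV. \<bar>z$j\<bar>)" by (rule norm_le_l1_cart)
  also have "\<dots> \<le> (\<Sum>j\<in>(UNIV::'n set). K)" by (rule sum_mono) (rule assms)
  finally show ?thesis by simp
qed

lemma spatial:
  fixes F :: "real^'n \<Rightarrow> real"
  assumes dF: "\<And>z. (F has_derivative (\<lambda>v. Gr z \<bullet> v)) (at z)"
    and SD: "\<And>a b y. dist a x0 < 4*r \<Longrightarrow> dist b x0 < 4*r \<Longrightarrow> norm y \<le> 4*r \<Longrightarrow>
               norm (Gr (a + y) - Gr a - (Gr (b + y) - Gr b)) \<le> \<epsilon>"
    and r: "0 < r"
  shows "\<exists>B. transpose B = B \<and> (\<forall>x. dist x x0 < r \<longrightarrow>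
            norm (Gr x - Gr x0 - B *v (x - x0)) \<le> real CARD('n) * ((3 + real CARD('n)) * \<epsilon> / 2))"
proof -
  let ?e = "\<lambda>j. axis j (1::real) :: real^'n"
  define Q where "Q j i = F (x0 + r *\<^sub>R ?e j + r *\<^sub>R ?e i) - F (x0 + r *\<^sub>R ?e j - r *\<^sub>R ?e i)
       - F (x0 - r *\<^sub>R ?e j + r *\<^sub>R ?e i) + F (x0 - r *\<^sub>R ?e j - r *\<^sub>R ?e i)" for j i
  have Qsym: "Q j i = Q i j" for i j
  proof -
    have "x0 + r *\<^sub>R ?e j - r *\<^sub>R ?e i = x0 - r *\<^sub>R ?e i + r *\<^sub>R ?e j"
         "x0 - r *\<^sub>R ?e j + r *\<^sub>R ?e i = x0 + r *\<^sub>R ?e i - r *\<^sub>R ?e j"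
         "x0 + r *\<^sub>R ?e j + r *\<^sub>R ?e i = x0 + r *\<^sub>R ?e i + r *\<^sub>R ?e j"
         "x0 - r *\<^sub>R ?e j - r *\<^sub>R ?e i = x0 - r *\<^sub>R ?e i - r *\<^sub>R ?e j"
      by (simp_all add: algebra_simps)
    note eqs = this
    show ?thesis unfolding Q_def by (simp only: eqs)
  qed
  define B :: "real^'n^'n" where "B = (\<chi> j i. Q j i / (4 * r\<^sup>2))"
  have tB: "transpose B = B"
    unfolding B_def transpose_def by (simp add: vec_eq_iff Qsym)
  have cen: "\<bar>F (x + r *\<^sub>R ?e j) - F (x - r *\<^sub>R ?e j) - 2 * r * (Gr x $ j)\<bar> \<le> \<epsilon> * r"
    if "dist x x0 \<le> 2*r" for x j
    using cen_from_SD[OF dF SD r that, of "?e j"] by (simp add: inner_axis)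
  have main: "\<bar>(Gr x - Gr x0 - B *v (x - x0)) $ j\<bar> \<le> (3 + real CARD('n)) * \<epsilon> / 2"
    if x: "dist x x0 < r" for x j
  proof -
    let ?v = "x - x0"
    let ?p = "x0 + r *\<^sub>R ?e j" and ?q = "x0 - r *\<^sub>R ?e j"
    have nv: "norm ?v < r" using x by (simp add: dist_norm)
    have c1: "\<bar>F (x + r *\<^sub>R ?e j) - F (x - r *\<^sub>R ?e j) - 2 * r * (Gr x $ j)\<bar> \<le> \<epsilon> * r"
      by (rule cen) (use x r in auto)
    have c0: "\<bar>F (x0 + r *\<^sub>R ?e j) - F (x0 - r *\<^sub>R ?e j) - 2 * r * (Gr x0 $ j)\<bar> \<le> \<epsilon> * r"
      by (rule cen) (use r in auto)
    have mx: "\<bar>F (?p + ?v) - F (?q + ?v) - F ?p + F ?q - (Gr ?p - Gr ?q) \<bullet> ?v\<bar> \<le> \<epsilon> * norm ?v"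
      by (rule mixed_from_SD[OF dF SD r norm_axis_1 nv])
    have pv: "?p + ?v = x + r *\<^sub>R ?e j" and qv: "?q + ?v = x - r *\<^sub>R ?e j"
      by (simp_all add: algebra_simps)
    have eps0: "0 \<le> \<epsilon>" using SD[of x0 x0 0] r by simp
    have mx': "\<bar>F (?p + ?v) - F (?q + ?v) - F ?p + F ?q - (Gr ?p - Gr ?q) \<bullet> ?v\<bar> \<le> \<epsilon> * r"
      using mx nv eps0 by (smt (verit) mult_left_mono)
    have s1: "\<bar>2 * r * ((Gr x - Gr x0) $ j) - (Gr ?p - Gr ?q) \<bullet> ?v\<bar> \<le> 3 * (\<epsilon> * r)"
      using c1 c0 mx' unfolding pv qv vector_minus_component right_diff_distrib by linarith
    have dp: "dist ?p x0 \<le> 2*r" and dq: "dist ?q x0 \<le> 2*r" using r by (simp_all add: dist_norm)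
    have ci: "\<bar>Q j i - 2 * r * ((Gr ?p - Gr ?q) $ i)\<bar> \<le> 2 * (\<epsilon> * r)" for i
    proof -
      have a: "\<bar>F (?p + r *\<^sub>R ?e i) - F (?p - r *\<^sub>R ?e i) - 2 * r * (Gr ?p $ i)\<bar> \<le> \<epsilon> * r"
        by (rule cen[OF dp])
      have b: "\<bar>F (?q + r *\<^sub>R ?e i) - F (?q - r *\<^sub>R ?e i) - 2 * r * (Gr ?q $ i)\<bar> \<le> \<epsilon> * r"
        by (rule cen[OF dq])
      show ?thesis using a b unfolding Q_def by (simp add: algebra_simps)
    qed
    have ci': "\<bar>(Gr ?p - Gr ?q) $ i - Q j i / (2 * r)\<bar> \<le> \<epsilon>" for i
    proof -
      have "\<bar>(Gr ?p - Gr ?q) $ i - Q j i / (2 * r)\<bar> = \<bar>Q j i - 2 * r * ((Gr ?p - Gr ?q) $ i)\<bar> / (2 * r)"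
        using r by (simp add: field_simps abs_minus_commute)
      also have "\<dots> \<le> 2 * (\<epsilon> * r) / (2 * r)" by (rule divide_right_mono[OF ci]) (use r in simp)
      also have "\<dots> = \<epsilon>" using r by simp
      finally show ?thesis .
    qed
    have vi: "\<bar>?v $ i\<bar> \<le> r" for i using component_le_norm_cart[of ?v i] nv by simp
    have Bv: "2 * r * (B *v ?v) $ j = (\<Sum>i\<in>UNIV. Q j i / (2 * r) * ?v $ i)"
    proof -
      have "(B *v ?v) $ j = (\<Sum>i\<in>UNIV. Q j i / (4 * r\<^sup>2) * ?v $ i)"
        unfolding B_def matrix_vector_mult_def by simp
      then have "2 * r * (B *v ?v) $ j = (\<Sum>i\<in>UNIV. 2 * r * (Q j i / (4 * r\<^sup>2) * ?v $ i))"
        by (simp add: sum_distrib_left)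
      also have "\<dots> = (\<Sum>i\<in>UNIV. Q j i / (2 * r) * ?v $ i)"
        by (rule sum.cong) (use r in \<open>auto simp: power2_eq_square field_simps\<close>)
      finally show ?thesis .
    qed
    have Gv: "(Gr ?p - Gr ?q) \<bullet> ?v = (\<Sum>i\<in>UNIV. (Gr ?p - Gr ?q) $ i * ?v $ i)"
      by (simp add: inner_vec_def)
    have "\<bar>(Gr ?p - Gr ?q) \<bullet> ?v - 2 * r * (B *v ?v) $ j\<bar>
        = \<bar>\<Sum>i\<in>UNIV. ((Gr ?p - Gr ?q) $ i - Q j i / (2 * r)) * ?v $ i\<bar>"
      unfolding Bv Gv by (simp add: sum_subtractf left_diff_distrib)
    also have "\<dots> \<le> real CARD('n) * (\<epsilon> * r)"
      by (rule sum_abs_bound[OF ci' vi])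
    finally have s2: "\<bar>(Gr ?p - Gr ?q) \<bullet> ?v - 2 * r * (B *v ?v) $ j\<bar> \<le> real CARD('n) * (\<epsilon> * r)" .
    have "\<bar>2 * r * (Gr x - Gr x0 - B *v ?v) $ j\<bar> \<le> 3 * (\<epsilon> * r) + real CARD('n) * (\<epsilon> * r)"
      using s1 s2 by (simp add: algebra_simps)
    then have z: "\<bar>2 * r * (Gr x - Gr x0 - B *v ?v) $ j\<bar> \<le> 3 * (\<epsilon> * r) + real CARD('n) * (\<epsilon> * r)" .
    have e1: "\<bar>2 * r * (Gr x - Gr x0 - B *v ?v) $ j\<bar> = 2 * r * \<bar>(Gr x - Gr x0 - B *v ?v) $ j\<bar>"
      using r by (simp add: abs_mult)
    have e2: "2 * r * ((3 + real CARD('n)) * \<epsilon> / 2) = 3 * (\<epsilon> * r) + real CARD('n) * (\<epsilon> * r)"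
      by (simp add: algebra_simps)
    have "2 * r * \<bar>(Gr x - Gr x0 - B *v ?v) $ j\<bar> \<le> 2 * r * ((3 + real CARD('n)) * \<epsilon> / 2)"
      using z e1 e2 by linarith
    moreover have "0 < 2 * r" using r by simp
    ultimately show ?thesis by (rule mult_le_cancel_left_pos[THEN iffD1, rotated])
  qed
  show ?thesis
    by (rule exI[of _ B]) (use tB main norm_le_comp_bound in blast)
qed



lemma Ebound:
  fixes D :: "real^'n \<Rightarrow> real"
  assumes dD: "\<And>z. (D has_derivative (\<lambda>v. Gr z \<bullet> v)) (at z)"
    and SD: "\<And>a b y. dist a x0 < 4*r \<Longrightarrow> dist b x0 < 4*r \<Longrightarrow> norm y \<le> 4*r \<Longrightarrow>
               norm (Gr (a + y) - Gr a - (Gr (b + y) - Gr b)) \<le> \<epsilon>"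
    and flat: "\<And>y. norm y \<le> 2*r \<Longrightarrow> \<bar>D (x0 + y) - D x0\<bar> \<le> \<eta>"
    and r: "0 < r" and x: "dist x x0 < r"
  shows "norm (Gr x) \<le> real CARD('n) * (\<eta> / r + \<epsilon> / 2)"
proof (rule norm_le_comp_bound)
  fix j
  let ?e = "axis j (1::real) :: real^'n"
  have c: "\<bar>D (x + r *\<^sub>R ?e) - D (x - r *\<^sub>R ?e) - 2 * r * (Gr x \<bullet> ?e)\<bar> \<le> \<epsilon> * r"
  proof -
    have "dist x x0 \<le> 2*r" using x r by simp
    from cen_from_SD[OF dD SD r this norm_axis_1] show ?thesis .
  qed
  have nx: "norm (x - x0) < r" using x by (simp add: dist_norm)
  have "norm (x + r *\<^sub>R ?e - x0) \<le> norm (x - x0) + norm (r *\<^sub>R ?e)"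
    using dist_add_le[of x "r *\<^sub>R ?e" x0] by (simp add: dist_norm)
  then have n1: "norm (x + r *\<^sub>R ?e - x0) \<le> 2 * r" using nx r by simp
  have "norm (x - r *\<^sub>R ?e - x0) \<le> norm (x - x0) + norm (r *\<^sub>R ?e)"
    using dist_sub_le[of x "r *\<^sub>R ?e" x0] by (simp add: dist_norm)
  then have n2: "norm (x - r *\<^sub>R ?e - x0) \<le> 2 * r" using nx r by simp
  have f1: "\<bar>D (x + r *\<^sub>R ?e) - D x0\<bar> \<le> \<eta>" using flat[OF n1] by simp
  have f2: "\<bar>D (x - r *\<^sub>R ?e) - D x0\<bar> \<le> \<eta>" using flat[OF n2] by simp
  have "\<bar>2 * r * (Gr x $ j)\<bar> \<le> 2 * \<eta> + \<epsilon> * r"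
  proof -
    have ie: "Gr x \<bullet> ?e = Gr x $ j" by (simp add: inner_axis)
    show ?thesis using c f1 f2 unfolding ie by linarith
  qed
  moreover have "\<bar>2 * r * (Gr x $ j)\<bar> = 2 * r * \<bar>Gr x $ j\<bar>" using r by (simp add: abs_mult)
  moreover have "2 * r * (\<eta> / r + \<epsilon> / 2) = 2 * \<eta> + \<epsilon> * r" using r by (simp add: field_simps)
  ultimately have "2 * r * \<bar>Gr x $ j\<bar> \<le> 2 * r * (\<eta> / r + \<epsilon> / 2)" by linarith
  moreover have "0 < 2 * r" using r by simp
  ultimately show "\<bar>Gr x $ j\<bar> \<le> \<eta> / r + \<epsilon> / 2"
    by (rule mult_le_cancel_left_pos[THEN iffD1, rotated])
qed

lemma fcont:
  fixes g :: "real^'n \<Rightarrow> real"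
  assumes "\<And>x. g differentiable (at x)"
  shows "continuous_on UNIV g"
  by (simp add: assms continuous_at_imp_continuous_on differentiable_imp_continuous_within)

lemma flat_from_moll:
  fixes f :: "real \<Rightarrow> real^'n \<Rightarrow> real"
  assumes moll: "mollifier \<psi>" and r: "0 < r"
    and diff: "\<And>t x. f t differentiable (at x)"
    and mdiff: "\<And>t. (\<lambda>s. moll0 \<psi> (2*r) (sdelta y f) s x0) differentiable (at t)"
    and mbound: "\<And>\<sigma>. t0 - r\<^sup>2 < \<sigma> \<Longrightarrow> \<sigma> < t0 \<Longrightarrow> \<bar>deriv (\<lambda>s. moll0 \<psi> (2*r) (sdelta y f) s x0) \<sigma>\<bar> \<le> Bd"
    and s: "t0 - r\<^sup>2 < s" "s < t0" and s': "t0 - r\<^sup>2 < s'" "s' < t0"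
    and y: "norm y \<le> 2*r"
    and SDE: "\<And>a b z. dist a x0 < 4*r \<Longrightarrow> dist b x0 < 4*r \<Longrightarrow> norm z \<le> 4*r \<Longrightarrow>
        norm ((grad (f s) (a + z) - grad (f s') (a + z)) - (grad (f s) a - grad (f s') a)
          - ((grad (f s) (b + z) - grad (f s') (b + z)) - (grad (f s) b - grad (f s') b))) \<le> \<epsilon>"
  shows "\<bar>(f s (x0 + y) - f s' (x0 + y)) - (f s x0 - f s' x0)\<bar> \<le> r\<^sup>2 * Bd + \<epsilon> * r"
proof -
  let ?\<phi> = "rescale (2*r) \<psi>"
  let ?m = "\<lambda>\<sigma>. moll0 \<psi> (2*r) (sdelta y f) \<sigma> x0"
  define D where "D z = f s z - f s' z" for z
  define E where "E z = grad (f s) z - grad (f s') z" for z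
  define F where "F z = D (z + y) - D z" for z
  have r2: "0 < 2*r" using r by simp
  have dD: "(D has_derivative (\<lambda>v. E z \<bullet> v)) (at z)" for z
  proof -
    have "((\<lambda>z. f s z - f s' z) has_derivative (\<lambda>v. grad (f s) z \<bullet> v - grad (f s') z \<bullet> v)) (at z)"
      by (rule has_derivative_diff[OF grad_has_derivative[OF diff] grad_has_derivative[OF diff]])
    then show ?thesis unfolding D_def[abs_def] E_def by (simp add: inner_diff_left)
  qed
  have dF: "(F has_derivative (\<lambda>v. (E (z + y) - E z) \<bullet> v)) (at z)" for z
    unfolding F_def[abs_def] by (rule shift_deriv[OF dD])
  have Dc: "continuous_on UNIV D"
    unfolding D_def[abs_def] by (intro continuous_on_diff fcont diff)
  have Fc: "continuous_on UNIV F"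
  proof -
    have "continuous_on UNIV (\<lambda>z. D (z + y))"
      by (rule continuous_on_compose2[OF Dc]) (auto intro!: continuous_intros)
    then show ?thesis unfolding F_def[abs_def] using Dc by (intro continuous_on_diff)
  qed
  have hc: "continuous_on UNIV (\<lambda>w. sdelta y f \<sigma> (x0 - w))" for \<sigma>
  proof -
    have fc: "continuous_on UNIV (f \<sigma>)" by (rule fcont[OF diff])
    have "continuous_on UNIV (\<lambda>w. f \<sigma> (x0 - w + y))"
      by (rule continuous_on_compose2[OF fc]) (auto intro!: continuous_intros)
    moreover have "continuous_on UNIV (\<lambda>w. f \<sigma> (x0 - w))"
      by (rule continuous_on_compose2[OF fc]) (auto intro!: continuous_intros)
    ultimately show ?thesis unfolding sdelta_def by (intro continuous_on_diff)
  qed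
  have mdef: "?m \<sigma> = integral UNIV (\<lambda>w. sdelta y f \<sigma> (x0 - w) * ?\<phi> w)" for \<sigma>
    by (simp add: moll0_def sconv_def)
  have Fm: "?m s - ?m s' = integral UNIV (\<lambda>w. F (x0 - w) * ?\<phi> w)"
  proof -
    have "?m s - ?m s' = integral UNIV (\<lambda>w. sdelta y f s (x0 - w) * ?\<phi> w - sdelta y f s' (x0 - w) * ?\<phi> w)"
      unfolding mdef
      by (rule integral_diff[symmetric]) (rule conv_integrable[OF moll r2 hc])+
    also have "\<dots> = integral UNIV (\<lambda>w. F (x0 - w) * ?\<phi> w)"
      by (rule integral_cong) (simp add: F_def D_def sdelta_def algebra_simps)
    finally show ?thesis .
  qed
  have Bd0: "0 \<le> Bd" using mbound[OF s] by linarith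
  have tb: "\<bar>?m s - ?m s'\<bar> \<le> Bd * \<bar>s - s'\<bar>"
    by (rule time_bound[OF mdiff]) (use s s' in \<open>auto intro!: mbound\<close>)
  also have "\<dots> \<le> Bd * r\<^sup>2" using s s' Bd0 by (intro mult_left_mono) auto
  finally have tb': "\<bar>?m s - ?m s'\<bar> \<le> r\<^sup>2 * Bd" by (simp add: mult.commute)
  have F1c: "continuous_on UNIV (\<lambda>w. F (x0 + w))"
    by (rule continuous_on_compose2[OF Fc]) (auto intro!: continuous_intros)
  have F2c: "continuous_on UNIV (\<lambda>w. F (x0 - w))"
    by (rule continuous_on_compose2[OF Fc]) (auto intro!: continuous_intros)
  have refl: "integral UNIV (\<lambda>w. F (x0 - w) * ?\<phi> w) = integral UNIV (\<lambda>w. F (x0 + w) * ?\<phi> w)"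
    using conv_reflect[OF moll r2 F1c] by simp
  let ?g = "\<lambda>w. (F (x0 + w) + F (x0 - w)) / 2"
  have gc: "continuous_on UNIV ?g" using F1c F2c by (intro continuous_intros) auto
  have gint: "integral UNIV (\<lambda>w. ?g w * ?\<phi> w) = integral UNIV (\<lambda>w. F (x0 - w) * ?\<phi> w)"
  proof -
    have i1: "(\<lambda>w. F (x0 + w) * ?\<phi> w) integrable_on UNIV" by (rule conv_integrable[OF moll r2 F1c])
    have i2: "(\<lambda>w. F (x0 - w) * ?\<phi> w) integrable_on UNIV" by (rule conv_integrable[OF moll r2 F2c])
    have "integral UNIV (\<lambda>w. ?g w * ?\<phi> w) = integral UNIV (\<lambda>w. (1/2) * (F (x0 + w) * ?\<phi> w + F (x0 - w) * ?\<phi> w))"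
      by (rule integral_cong) (simp add: field_simps)
    also have "\<dots> = (1/2) * (integral UNIV (\<lambda>w. F (x0 + w) * ?\<phi> w) + integral UNIV (\<lambda>w. F (x0 - w) * ?\<phi> w))"
      using integral_add[OF i1 i2] integral_mult_right by simp
    finally show ?thesis using refl by simp
  qed
  have gb: "\<bar>?g w - F x0\<bar> \<le> \<epsilon> * r" if w: "norm w < 2*r" for w
  proof -
    have "\<bar>F (x0 + w) + F (x0 - w) - 2 * F x0\<bar> \<le> \<epsilon> * norm w"
    proof (rule sym_diff[OF dF])
      fix t :: real assume t: "t \<in> {0..1}"
      have nt: "norm (t *\<^sub>R w) \<le> norm w" using t by (simp add: mult_left_le_one_le)
      have "(E (x0 + t *\<^sub>R w + y) - E (x0 + t *\<^sub>R w)) - (E (x0 - t *\<^sub>R w + y) - E (x0 - t *\<^sub>R w))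
          = ((grad (f s) (x0 + t *\<^sub>R w + y) - grad (f s') (x0 + t *\<^sub>R w + y)) - (grad (f s) (x0 + t *\<^sub>R w) - grad (f s') (x0 + t *\<^sub>R w))
          - ((grad (f s) (x0 - t *\<^sub>R w + y) - grad (f s') (x0 - t *\<^sub>R w + y)) - (grad (f s) (x0 - t *\<^sub>R w) - grad (f s') (x0 - t *\<^sub>R w))))"
        by (simp add: E_def)
      moreover have "norm \<dots> \<le> \<epsilon>"
        by (rule SDE) (use nt w y r in \<open>auto simp: dist_norm\<close>)
      ultimately show "norm (E (x0 + t *\<^sub>R w + y) - E (x0 + t *\<^sub>R w) - (E (x0 - t *\<^sub>R w + y) - E (x0 - t *\<^sub>R w))) \<le> \<epsilon>"
        by simp
    qed
    moreover have e0: "0 \<le> \<epsilon>" using SDE[of x0 x0 0] r by simp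
    ultimately have "\<bar>F (x0 + w) + F (x0 - w) - 2 * F x0\<bar> \<le> \<epsilon> * (2 * r)"
      using w by (smt (verit) mult_left_mono)
    then show ?thesis by (simp add: field_simps)
  qed
  have cb: "\<bar>integral UNIV (\<lambda>w. ?g w * ?\<phi> w) - F x0\<bar> \<le> \<epsilon> * r"
    by (rule conv_bound[OF moll r2 gc gb])
  have "F x0 = (f s (x0 + y) - f s' (x0 + y)) - (f s x0 - f s' x0)" by (simp add: F_def D_def add.commute)
  then show ?thesis using cb gint Fm tb' by linarith
qed



lemma arith_final:
  fixes r \<alpha> A0 A1 d :: real
  assumes r: "0 < r" and a1: "1/2 < \<alpha>" and a2: "\<alpha> < 1" and A0: "0 \<le> A0" and A1: "0 \<le> A1" and d: "0 \<le> d"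
  shows "d * ((r\<^sup>2 * (A0 / (2*r) powr (1 - 2*\<alpha>)) + (2 * (2*A1*(4*r) powr (2*\<alpha>))) * r) / r + 2*A1*(4*r) powr (2*\<alpha>))
       + d * ((3 + d) * (2*A1*(4*r) powr (2*\<alpha>)) / 2)
       \<le> 16 * d * (d + 9) * (A0 + A1) * r powr (2*\<alpha>)"
proof -
  define P where "P = r powr (2*\<alpha>)"
  define \<epsilon> where "\<epsilon> = 2*A1*(4*r) powr (2*\<alpha>)"
  have P0: "0 \<le> P" unfolding P_def by simp
  have "(4*r) powr (2*\<alpha>) = 4 powr (2*\<alpha>) * P" unfolding P_def using r by (simp add: powr_mult)
  moreover have "4 powr (2*\<alpha>) \<le> 4 powr (2::real)" using a2 by (intro powr_mono) auto
  moreover have "(4::real) powr (2::real) = 16" by (simp add: powr_numeral)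
  ultimately have "(4*r) powr (2*\<alpha>) \<le> 16 * P" using P0 by (simp add: mult_right_mono)
  then have "2*A1*(4*r) powr (2*\<alpha>) \<le> 2*A1*(16*P)" using A1 by (intro mult_left_mono) auto
  then have eps: "\<epsilon> \<le> 32 * A1 * P" unfolding \<epsilon>_def by simp
  have eps0: "0 \<le> \<epsilon>" unfolding \<epsilon>_def using A1 by simp
  have q: "r / (2*r) powr (1 - 2*\<alpha>) = 2 powr (2*\<alpha> - 1) * P"
  proof -
    have "(2*r) powr (1 - 2*\<alpha>) = 2 powr (1 - 2*\<alpha>) * r powr (1 - 2*\<alpha>)" using r by (simp add: powr_mult)
    moreover have "r = r powr (1 - 2*\<alpha>) * r powr (2*\<alpha>)" using r by (simp add: powr_add[symmetric])
    moreover have "2 powr (2*\<alpha> - 1) = 1 / 2 powr (1 - 2*\<alpha>)"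
      by (simp add: powr_minus_divide[symmetric] powr_minus)
    ultimately show ?thesis unfolding P_def using r by (simp add: field_simps)
  qed
  have q2: "2 powr (2*\<alpha> - 1) \<le> (2::real)"
  proof -
    have "(2::real) powr (2*\<alpha> - 1) \<le> 2 powr 1" using a2 by (intro powr_mono) auto
    then show ?thesis by simp
  qed
  have eta: "(r\<^sup>2 * (A0 / (2*r) powr (1 - 2*\<alpha>)) + (2 * \<epsilon>) * r) / r = A0 * (r / (2*r) powr (1 - 2*\<alpha>)) + 2 * \<epsilon>"
    using r by (simp add: power2_eq_square field_simps)
  have "A0 * (r / (2*r) powr (1 - 2*\<alpha>)) \<le> A0 * (2 * P)"
    unfolding q using A0 P0 q2 by (intro mult_left_mono mult_right_mono) auto
  then have eta2: "(r\<^sup>2 * (A0 / (2*r) powr (1 - 2*\<alpha>)) + (2 * \<epsilon>) * r) / r \<le> 2 * A0 * P + 2 * \<epsilon>"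
    unfolding eta by simp
  have "d * ((r\<^sup>2 * (A0 / (2*r) powr (1 - 2*\<alpha>)) + (2 * \<epsilon>) * r) / r + \<epsilon>) + d * ((3 + d) * \<epsilon> / 2)
      \<le> d * (2 * A0 * P + 3 * \<epsilon>) + d * ((3 + d) * \<epsilon> / 2)"
    using eta2 d by (intro add_right_mono mult_left_mono) auto
  also have "\<dots> = 2 * d * A0 * P + d * (9 + d) / 2 * \<epsilon>" by (simp add: field_simps)
  also have "\<dots> \<le> 2 * d * A0 * P + d * (9 + d) / 2 * (32 * A1 * P)"
    using eps d by (intro add_left_mono mult_left_mono) auto
  also have "\<dots> \<le> 16 * d * (d + 9) * (A0 + A1) * P"
  proof -
    have "2 * d * A0 * P \<le> 16 * d * (d + 9) * A0 * P"
      using d A0 P0 by (intro mult_right_mono) (auto intro!: mult_right_mono simp: algebra_simps)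
    moreover have "d * (9 + d) / 2 * (32 * A1 * P) = 16 * d * (d + 9) * A1 * P" by (simp add: algebra_simps)
    ultimately show ?thesis by (simp add: algebra_simps)
  qed
  finally show ?thesis unfolding \<epsilon>_def P_def .
qed



lemma sd_combine:
  fixes a1 a2 a3 a4 b1 b2 b3 b4 :: "real^'n"
  shows "norm ((a1 - b1) - (a2 - b2) - ((a3 - b3) - (a4 - b4)))
     \<le> norm (a1 - a2 - (a3 - a4)) + norm (b1 - b2 - (b3 - b4))"
proof -
  have "(a1 - b1) - (a2 - b2) - ((a3 - b3) - (a4 - b4)) = (a1 - a2 - (a3 - a4)) - (b1 - b2 - (b3 - b4))"
    by (simp add: algebra_simps)
  then show ?thesis by (simp only:) (rule norm_triangle_ineq4)
qed

lemma scale_bound: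
  fixes f :: "real \<Rightarrow> real^'n \<Rightarrow> real" and \<psi> :: "real^'n \<Rightarrow> real"
  assumes moll: "mollifier \<psi>" and r: "0 < r"
    and a1: "1/2 < \<alpha>" and a2: "\<alpha> < 1" and A0: "0 \<le> A0" and A1: "0 \<le> A1"
    and diff: "\<And>t x. f t differentiable (at x)"
    and SD: "\<And>l \<sigma> a b y. 0 < l \<Longrightarrow> t0 - l\<^sup>2 < \<sigma> \<Longrightarrow> \<sigma> < t0 \<Longrightarrow> dist a x0 < l \<Longrightarrow> dist b x0 < l \<Longrightarrow> norm y \<le> l \<Longrightarrow>
         norm (grad (f \<sigma>) (a + y) - grad (f \<sigma>) a - (grad (f \<sigma>) (b + y) - grad (f \<sigma>) b)) \<le> 2 * A1 * l powr (2*\<alpha>)"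
    and mdiff: "\<And>\<rho> y t. 0 < \<rho> \<Longrightarrow> norm y \<le> \<rho> \<Longrightarrow> (\<lambda>s. moll0 \<psi> \<rho> (sdelta y f) s x0) differentiable (at t)"
    and TD: "\<And>\<rho> y \<sigma>. 0 < \<rho> \<Longrightarrow> norm y \<le> \<rho> \<Longrightarrow> t0 - \<rho>\<^sup>2 < \<sigma> \<Longrightarrow> \<sigma> < t0 \<Longrightarrow>
         \<bar>deriv (\<lambda>s. moll0 \<psi> \<rho> (sdelta y f) s x0) \<sigma>\<bar> \<le> A0 / \<rho> powr (1 - 2*\<alpha>)"
  shows "\<exists>B b. transpose B = B \<and> (\<forall>s x. t0 - r\<^sup>2 < s \<longrightarrow> s < t0 \<longrightarrow> dist x x0 < r \<longrightarrow>
     norm (grad (f s) x - (B *v (x - x0) + b)) \<le> 16 * real CARD('n) * (real CARD('n) + 9) * (A0 + A1) * r powr (2*\<alpha>))"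
proof -
  define \<epsilon> where "\<epsilon> = 2*A1*(4*r) powr (2*\<alpha>)"
  define d where "d = real CARD('n)"
  let ?G = "\<lambda>\<sigma>. grad (f \<sigma>)"
  have SDr: "norm (?G \<sigma> (a + y) - ?G \<sigma> a - (?G \<sigma> (b + y) - ?G \<sigma> b)) \<le> \<epsilon>"
    if "t0 - r\<^sup>2 < \<sigma>" "\<sigma> < t0" "dist a x0 < 4*r" "dist b x0 < 4*r" "norm y \<le> 4*r" for \<sigma> a b y
  proof -
    have "t0 - (4*r)\<^sup>2 < \<sigma>" using that(1) r by (simp add: power2_eq_square) (smt (verit) mult_pos_pos)
    from SD[of "4*r", OF _ this that(2-5)] r show ?thesis unfolding \<epsilon>_def by simp
  qed
  define s0 where "s0 = t0 - r\<^sup>2 / 2"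
  have s0: "t0 - r\<^sup>2 < s0" "s0 < t0" unfolding s0_def using r by auto
  obtain B where tB: "transpose B = B"
    and Bb: "\<And>x. dist x x0 < r \<Longrightarrow> norm (?G s0 x - ?G s0 x0 - B *v (x - x0)) \<le> d * ((3 + d) * \<epsilon> / 2)"
    using spatial[OF grad_has_derivative[OF diff] SDr[OF s0] r] unfolding d_def by blast
  define b where "b = ?G s0 x0"
  have main: "norm (?G s x - (B *v (x - x0) + b)) \<le> 16 * d * (d + 9) * (A0 + A1) * r powr (2*\<alpha>)"
    if s: "t0 - r\<^sup>2 < s" "s < t0" and x: "dist x x0 < r" for s x
  proof -
    define E where "E z = ?G s z - ?G s0 z" for z
    define D where "D z = f s z - f s0 z" for z
    have dD: "(D has_derivative (\<lambda>v. E z \<bullet> v)) (at z)" for z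
    proof -
      have "((\<lambda>z. f s z - f s0 z) has_derivative (\<lambda>v. grad (f s) z \<bullet> v - grad (f s0) z \<bullet> v)) (at z)"
        by (rule has_derivative_diff[OF grad_has_derivative[OF diff] grad_has_derivative[OF diff]])
      then show ?thesis unfolding D_def[abs_def] E_def by (simp add: inner_diff_left)
    qed
    have SDE: "norm ((?G s (a + z) - ?G s0 (a + z)) - (?G s a - ?G s0 a)
          - ((?G s (b + z) - ?G s0 (b + z)) - (?G s b - ?G s0 b))) \<le> 2 * \<epsilon>"
      if "dist a x0 < 4*r" "dist b x0 < 4*r" "norm z \<le> 4*r" for a b z
      using sd_combine[of "?G s (a + z)" "?G s0 (a + z)" "?G s a" "?G s0 a" "?G s (b + z)" "?G s0 (b + z)" "?G s b" "?G s0 b"]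
        SDr[OF s that] SDr[OF s0 that] by linarith
    have SDE': "norm (E (a + z) - E a - (E (b + z) - E b)) \<le> 2 * \<epsilon>"
      if "dist a x0 < 4*r" "dist b x0 < 4*r" "norm z \<le> 4*r" for a b z
      unfolding E_def using SDE[OF that] .
    have r2: "0 < 2*r" using r by simp
    have flat: "\<bar>D (x0 + y) - D x0\<bar> \<le> r\<^sup>2 * (A0 / (2*r) powr (1 - 2*\<alpha>)) + (2 * \<epsilon>) * r"
      if y: "norm y \<le> 2*r" for y
    proof -
      have "\<bar>(f s (x0 + y) - f s0 (x0 + y)) - (f s x0 - f s0 x0)\<bar> \<le> r\<^sup>2 * (A0 / (2*r) powr (1 - 2*\<alpha>)) + (2 * \<epsilon>) * r"
      proof (rule flat_from_moll[OF moll r diff mdiff[OF r2 y] _ s s0 y SDE])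
        fix \<sigma> assume "t0 - r\<^sup>2 < \<sigma>" "\<sigma> < t0"
        moreover have "t0 - (2*r)\<^sup>2 < \<sigma>" using \<open>t0 - r\<^sup>2 < \<sigma>\<close> r by (simp add: power2_eq_square) (smt (verit) mult_pos_pos)
        ultimately show "\<bar>deriv (\<lambda>s. moll0 \<psi> (2*r) (sdelta y f) s x0) \<sigma>\<bar> \<le> A0 / (2*r) powr (1 - 2*\<alpha>)"
          using TD[OF r2 y] by blast
      qed
      then show ?thesis unfolding D_def .
    qed
    have Eb: "norm (E x) \<le> d * ((r\<^sup>2 * (A0 / (2*r) powr (1 - 2*\<alpha>)) + (2 * \<epsilon>) * r) / r + 2 * \<epsilon> / 2)"
      unfolding d_def by (rule Ebound[OF dD SDE' flat r x])
    have eq: "?G s x - (B *v (x - x0) + b) = E x + (?G s0 x - ?G s0 x0 - B *v (x - x0))"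
      unfolding E_def b_def by (simp add: algebra_simps)
    have "norm (?G s x - (B *v (x - x0) + b)) \<le> norm (E x) + norm (?G s0 x - ?G s0 x0 - B *v (x - x0))"
      unfolding eq by (rule norm_triangle_ineq)
    also have "\<dots> \<le> d * ((r\<^sup>2 * (A0 / (2*r) powr (1 - 2*\<alpha>)) + (2 * \<epsilon>) * r) / r + \<epsilon>) + d * ((3 + d) * \<epsilon> / 2)"
      using Eb Bb[OF x] by simp
    also have "\<dots> \<le> 16 * d * (d + 9) * (A0 + A1) * r powr (2*\<alpha>)"
      unfolding \<epsilon>_def by (rule arith_final[OF r a1 a2 A0 A1]) (simp add: d_def)
    finally show ?thesis .
  qed
  show ?thesis using tB main unfolding d_def by blast
qed



lemma supn_nonneg: "p \<in> S \<Longrightarrow> 0 \<le> supn g S"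
  unfolding supn_def by (rule SUP_upper2) auto

lemma Pcyl_mem: "(s, x) \<in> Pcyl l (t0, x0) \<longleftrightarrow> t0 - l\<^sup>2 < s \<and> s < t0 \<and> dist x x0 < l"
  by (simp add: Pcyl_def)

lemma Pcyl_ne: "0 < l \<Longrightarrow> (t0 - l\<^sup>2 / 2, x0) \<in> Pcyl l (t0, x0)"
  by (simp add: Pcyl_def)

lemma supn_point:
  "p \<in> S \<Longrightarrow> ereal (norm (g p)) \<le> supn g S"
  unfolding supn_def by (rule SUP_upper)

lemma sdelta_fun: "sdelta y f \<sigma> = (\<lambda>x. f \<sigma> (x + y) - f \<sigma> x)"
  by (rule ext) (simp add: sdelta_def)

lemma SD_from_T1:
  fixes f :: "real \<Rightarrow> real^'n \<Rightarrow> real"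
  assumes diff: "\<And>t x. f t differentiable (at x)"
    and T1: "(SUP l\<in>{0<..}. ereal (1 / l powr (2 * \<alpha>)) *
              (SUP y\<in>{y. norm y \<le> l}. INF k\<in>(UNIV :: (real^'n) set).
                 supn (\<lambda>(s, x). grad (sdelta y f s) x - k) (Pcyl l (t0, x0)))) \<le> ereal A1"
    and l: "0 < l" and \<sigma>: "t0 - l\<^sup>2 < \<sigma>" "\<sigma> < t0" and a: "dist a x0 < l" and b: "dist b x0 < l"
    and y: "norm y \<le> l"
  shows "norm (grad (f \<sigma>) (a + y) - grad (f \<sigma>) a - (grad (f \<sigma>) (b + y) - grad (f \<sigma>) b)) \<le> 2 * A1 * l powr (2*\<alpha>)"
proof -
  let ?S = "\<lambda>y. INF k\<in>(UNIV :: (real^'n) set). supn (\<lambda>(s, x). grad (sdelta y f s) x - k) (Pcyl l (t0, x0))"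
  have "ereal (1 / l powr (2 * \<alpha>)) * (SUP y\<in>{y. norm y \<le> l}. ?S y) \<le> ereal A1"
    by (rule order_trans[OF SUP_upper T1]) (use l in simp)
  then have "(SUP y\<in>{y. norm y \<le> l}. ?S y) \<le> ereal (A1 / (1 / l powr (2 * \<alpha>)))"
    by (rule ereal_mult_le_imp[rotated]) (use l in simp)
  then have S1: "(SUP y\<in>{y. norm y \<le> l}. ?S y) \<le> ereal (A1 * l powr (2 * \<alpha>))" by simp
  have "?S y \<le> (SUP y\<in>{y. norm y \<le> l}. ?S y)" by (rule SUP_upper) (simp add: y)
  then have Sy: "?S y \<le> ereal (A1 * l powr (2 * \<alpha>))" using S1 by (rule order_trans)
  have G: "grad (sdelta y f \<sigma>) z = grad (f \<sigma>) (z + y) - grad (f \<sigma>) z" for z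
    unfolding sdelta_fun by (rule grad_shift_diff[OF diff])
  have "norm (grad (f \<sigma>) (a + y) - grad (f \<sigma>) a - (grad (f \<sigma>) (b + y) - grad (f \<sigma>) b)) \<le> 2 * A1 * l powr (2*\<alpha>) + e"
    if e: "0 < e" for e
  proof -
    have "?S y < ereal (A1 * l powr (2 * \<alpha>) + e / 2)"
      by (rule le_less_trans[OF Sy]) (use e in simp)
    then obtain k where k: "supn (\<lambda>(s, x). grad (sdelta y f s) x - k) (Pcyl l (t0, x0)) < ereal (A1 * l powr (2 * \<alpha>) + e / 2)"
      unfolding INF_less_iff by blast
    have pa: "norm (grad (sdelta y f \<sigma>) a - k) < A1 * l powr (2 * \<alpha>) + e / 2"
    proof -
      have "ereal (norm ((\<lambda>(s, x). grad (sdelta y f s) x - k) (\<sigma>, a))) \<le> supn (\<lambda>(s, x). grad (sdelta y f s) x - k) (Pcyl l (t0, x0))"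
        by (rule supn_point) (simp add: Pcyl_mem \<sigma> a)
      from le_less_trans[OF this k] show ?thesis by simp
    qed
    have pb: "norm (grad (sdelta y f \<sigma>) b - k) < A1 * l powr (2 * \<alpha>) + e / 2"
    proof -
      have "ereal (norm ((\<lambda>(s, x). grad (sdelta y f s) x - k) (\<sigma>, b))) \<le> supn (\<lambda>(s, x). grad (sdelta y f s) x - k) (Pcyl l (t0, x0))"
        by (rule supn_point) (simp add: Pcyl_mem \<sigma> b)
      from le_less_trans[OF this k] show ?thesis by simp
    qed
    have "norm (grad (sdelta y f \<sigma>) a - grad (sdelta y f \<sigma>) b) \<le> norm (grad (sdelta y f \<sigma>) a - k) + norm (grad (sdelta y f \<sigma>) b - k)"
      using norm_triangle_ineq4[of "grad (sdelta y f \<sigma>) a - k" "grad (sdelta y f \<sigma>) b - k"] by simp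
    then show ?thesis using pa pb unfolding G by linarith
  qed
  then show ?thesis by (rule field_le_epsilon)
qed

lemma TD_from_T0:
  fixes f :: "real \<Rightarrow> real^'n \<Rightarrow> real"
  assumes T0: "(SUP r\<in>{0<..}. ereal (r powr (1 - 2 * \<alpha>)) *
              (SUP y\<in>{y. norm y \<le> r}.
                 supn (\<lambda>(s, x). deriv (\<lambda>s'. moll0 \<psi> r (sdelta y f) s' x) s) (Pcyl r (t0, x0)))) \<le> ereal A0"
    and \<rho>: "0 < \<rho>" and y: "norm y \<le> \<rho>" and \<sigma>: "t0 - \<rho>\<^sup>2 < \<sigma>" "\<sigma> < t0"
  shows "\<bar>deriv (\<lambda>s. moll0 \<psi> \<rho> (sdelta y f) s x0) \<sigma>\<bar> \<le> A0 / \<rho> powr (1 - 2*\<alpha>)"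
proof -
  let ?S = "\<lambda>y. supn (\<lambda>(s, x). deriv (\<lambda>s'. moll0 \<psi> \<rho> (sdelta y f) s' x) s) (Pcyl \<rho> (t0, x0))"
  have "ereal (\<rho> powr (1 - 2 * \<alpha>)) * (SUP y\<in>{y. norm y \<le> \<rho>}. ?S y) \<le> ereal A0"
    by (rule order_trans[OF SUP_upper T0]) (use \<rho> in simp)
  then have "(SUP y\<in>{y. norm y \<le> \<rho>}. ?S y) \<le> ereal (A0 / \<rho> powr (1 - 2 * \<alpha>))"
    by (rule ereal_mult_le_imp[rotated]) (use \<rho> in simp)
  then have S1: "(SUP y\<in>{y. norm y \<le> \<rho>}. ?S y) \<le> ereal (A0 / \<rho> powr (1 - 2 * \<alpha>))" by simp
  have "?S y \<le> (SUP y\<in>{y. norm y \<le> \<rho>}. ?S y)" by (rule SUP_upper) (simp add: y)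
  then have Sy: "?S y \<le> ereal (A0 / \<rho> powr (1 - 2 * \<alpha>))" using S1 by (rule order_trans)
  have "ereal (norm ((\<lambda>(s, x). deriv (\<lambda>s'. moll0 \<psi> \<rho> (sdelta y f) s' x) s) (\<sigma>, x0))) \<le> ?S y"
    by (rule supn_point) (simp add: Pcyl_mem \<sigma> \<rho>)
  from order_trans[OF this Sy] show ?thesis by simp
qed



lemma final_ereal:
  fixes L T1 T0 TS :: ereal
  assumes C: "0 < C" and n1: "0 \<le> T1" and n0: "0 \<le> T0" and ns: "0 \<le> TS"
    and main: "\<And>A1 A0. T1 = ereal A1 \<Longrightarrow> T0 = ereal A0 \<Longrightarrow> 0 \<le> A1 \<Longrightarrow> 0 \<le> A0 \<Longrightarrow> L \<le> ereal (C * (A0 + A1))"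
  shows "L \<le> ereal C * (T1 + T0 + TS)"
proof (cases "T1 = \<infinity> \<or> T0 = \<infinity>")
  case True
  then have S: "T1 + T0 + TS = \<infinity>" using n1 n0 ns by auto
  have "ereal C * \<infinity> = \<infinity>" using C by simp
  then show ?thesis unfolding S by simp
next
  case False
  then obtain A1 A0 where a1: "T1 = ereal A1" and a0: "T0 = ereal A0"
    using n1 n0 by (cases T1; cases T0) auto
  have A1: "0 \<le> A1" and A0: "0 \<le> A0" using a1 a0 n1 n0 by auto
  have "L \<le> ereal (C * (A0 + A1))" by (rule main[OF a1 a0 A1 A0])
  also have "\<dots> = ereal C * (T1 + T0)" using a1 a0 by (simp add: algebra_simps)
  also have "\<dots> \<le> ereal C * (T1 + T0 + TS)"
    by (rule ereal_mult_left_mono) (use ns C in \<open>auto intro: add_increasing2\<close>)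
  finally show ?thesis .
qed

theorem corollary1:
  fixes \<psi> :: "real^'n \<Rightarrow> real" and \<alpha> :: real
  assumes "mollifier \<psi>" and "1/2 < \<alpha>" and "\<alpha> < 1"
  shows "\<exists>C>0. \<forall>(f :: real \<Rightarrow> real^'n \<Rightarrow> real) (t0 :: real) (x0 :: real^'n).
    (\<forall>t x. f t differentiable (at x))
    \<longrightarrow> (\<exists>M. \<forall>t x s y. norm (grad (f t) x - grad (f s) y)
                       \<le> M * pdist (t, x) (s, y) powr \<alpha>)
    \<longrightarrow> (\<forall>r>0. \<forall>y. norm y \<le> r \<longrightarrow> (\<forall>t x.
           (\<lambda>s. moll0 \<psi> r (sdelta y f) s x) differentiable (at t)
           \<and> (\<forall>i. (\<lambda>s. molli \<psi> i r (sdelta y f) s x) differentiable (at t))))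
    \<longrightarrow> (SUP r\<in>{0<..}. ereal (1 / r powr (2 * \<alpha>)) *
          (INF Bb\<in>{(B :: real^'n^'n, b :: real^'n). transpose B = B}.
             supn (\<lambda>(s, x). grad (f s) x - (fst Bb *v (x - x0) + snd Bb)) (Pcyl r (t0, x0))))
        \<le> ereal C *
          ((SUP l\<in>{0<..}. ereal (1 / l powr (2 * \<alpha>)) *
              (SUP y\<in>{y. norm y \<le> l}. INF k\<in>(UNIV :: (real^'n) set).
                 supn (\<lambda>(s, x). grad (sdelta y f s) x - k) (Pcyl l (t0, x0))))
           + (SUP r\<in>{0<..}. ereal (r powr (1 - 2 * \<alpha>)) *
              (SUP y\<in>{y. norm y \<le> r}.
                 supn (\<lambda>(s, x). deriv (\<lambda>s'. moll0 \<psi> r (sdelta y f) s' x) s) (Pcyl r (t0, x0))))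
           + (\<Sum>i\<in>(UNIV :: 'n set). SUP r\<in>{0<..}. ereal (r powr (1 - 2 * \<alpha>)) *
              (SUP y\<in>{y. norm y \<le> r}.
                 supn (\<lambda>(s, x). deriv (\<lambda>s'. molli \<psi> i r (sdelta y f) s' x) s) (Pcyl r (t0, x0)))))"
proof -
  define C where "C = 16 * real CARD('n) * (real CARD('n) + 9)"
  have C0: "0 < C" unfolding C_def by simp
  show ?thesis
  proof (intro exI[of _ C] conjI allI impI)
    show "0 < C" by (rule C0)
    fix f :: "real \<Rightarrow> real^'n \<Rightarrow> real" and t0 :: real and x0 :: "real^'n"
    assume diffH: "\<forall>t x. f t differentiable (at x)"
      and holH: "\<exists>M. \<forall>t x s y. norm (grad (f t) x - grad (f s) y) \<le> M * pdist (t, x) (s, y) powr \<alpha>"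
      and mdH: "\<forall>r>0. \<forall>y. norm y \<le> r \<longrightarrow> (\<forall>t x.
           (\<lambda>s. moll0 \<psi> r (sdelta y f) s x) differentiable (at t)
           \<and> (\<forall>i. (\<lambda>s. molli \<psi> i r (sdelta y f) s x) differentiable (at t)))"
    have diff: "\<And>t x. f t differentiable (at x)" using diffH by blast
    have mdiff: "\<And>\<rho> y t. 0 < \<rho> \<Longrightarrow> norm y \<le> \<rho> \<Longrightarrow> (\<lambda>s. moll0 \<psi> \<rho> (sdelta y f) s x0) differentiable (at t)"
      using mdH by blast
    show "(SUP r\<in>{0<..}. ereal (1 / r powr (2 * \<alpha>)) *
          (INF Bb\<in>{(B :: real^'n^'n, b :: real^'n). transpose B = B}.
             supn (\<lambda>(s, x). grad (f s) x - (fst Bb *v (x - x0) + snd Bb)) (Pcyl r (t0, x0))))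
        \<le> ereal C *
          ((SUP l\<in>{0<..}. ereal (1 / l powr (2 * \<alpha>)) *
              (SUP y\<in>{y. norm y \<le> l}. INF k\<in>(UNIV :: (real^'n) set).
                 supn (\<lambda>(s, x). grad (sdelta y f s) x - k) (Pcyl l (t0, x0))))
           + (SUP r\<in>{0<..}. ereal (r powr (1 - 2 * \<alpha>)) *
              (SUP y\<in>{y. norm y \<le> r}.
                 supn (\<lambda>(s, x). deriv (\<lambda>s'. moll0 \<psi> r (sdelta y f) s' x) s) (Pcyl r (t0, x0))))
           + (\<Sum>i\<in>(UNIV :: 'n set). SUP r\<in>{0<..}. ereal (r powr (1 - 2 * \<alpha>)) *
              (SUP y\<in>{y. norm y \<le> r}.
                 supn (\<lambda>(s, x). deriv (\<lambda>s'. molli \<psi> i r (sdelta y f) s' x) s) (Pcyl r (t0, x0)))))"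
    proof (rule final_ereal[OF C0])
      show "0 \<le> (SUP l\<in>{0<..}. ereal (1 / l powr (2 * \<alpha>)) *
              (SUP y\<in>{y. norm y \<le> l}. INF k\<in>(UNIV :: (real^'n) set).
                 supn (\<lambda>(s, x). grad (sdelta y f s) x - k) (Pcyl l (t0, x0))))"
      proof (rule SUP_upper2[of 1])
        have "0 \<le> (INF k\<in>(UNIV :: (real^'n) set). supn (\<lambda>(s, x). grad (sdelta 0 f s) x - k) (Pcyl 1 (t0, x0)))"
          by (rule INF_greatest) (rule supn_nonneg[OF Pcyl_ne[of 1]], simp)
        also have "\<dots> \<le> (SUP y\<in>{y. norm y \<le> 1}. INF k\<in>(UNIV :: (real^'n) set).
                 supn (\<lambda>(s, x). grad (sdelta y f s) x - k) (Pcyl 1 (t0, x0)))"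
          by (rule SUP_upper) simp
        finally show "0 \<le> ereal (1 / 1 powr (2 * \<alpha>)) * (SUP y\<in>{y. norm y \<le> 1}. INF k\<in>(UNIV :: (real^'n) set).
                 supn (\<lambda>(s, x). grad (sdelta y f s) x - k) (Pcyl 1 (t0, x0)))" by simp
      qed simp
      show "0 \<le> (SUP r\<in>{0<..}. ereal (r powr (1 - 2 * \<alpha>)) *
              (SUP y\<in>{y. norm y \<le> r}.
                 supn (\<lambda>(s, x). deriv (\<lambda>s'. moll0 \<psi> r (sdelta y f) s' x) s) (Pcyl r (t0, x0))))"
      proof (rule SUP_upper2[of 1])
        have "0 \<le> supn (\<lambda>(s, x). deriv (\<lambda>s'. moll0 \<psi> 1 (sdelta 0 f) s' x) s) (Pcyl 1 (t0, x0))"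
          by (rule supn_nonneg[OF Pcyl_ne[of 1]]) simp
        also have "\<dots> \<le> (SUP y\<in>{y. norm y \<le> 1}.
                 supn (\<lambda>(s, x). deriv (\<lambda>s'. moll0 \<psi> 1 (sdelta y f) s' x) s) (Pcyl 1 (t0, x0)))"
          by (rule SUP_upper) simp
        finally show "0 \<le> ereal (1 powr (1 - 2 * \<alpha>)) * (SUP y\<in>{y. norm y \<le> 1}.
                 supn (\<lambda>(s, x). deriv (\<lambda>s'. moll0 \<psi> 1 (sdelta y f) s' x) s) (Pcyl 1 (t0, x0)))" by simp
      qed simp
      show "0 \<le> (\<Sum>i\<in>(UNIV :: 'n set). SUP r\<in>{0<..}. ereal (r powr (1 - 2 * \<alpha>)) *
              (SUP y\<in>{y. norm y \<le> r}.
                 supn (\<lambda>(s, x). deriv (\<lambda>s'. molli \<psi> i r (sdelta y f) s' x) s) (Pcyl r (t0, x0))))"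
      proof (rule sum_nonneg)
        fix i :: 'n
        show "0 \<le> (SUP r\<in>{0<..}. ereal (r powr (1 - 2 * \<alpha>)) *
              (SUP y\<in>{y. norm y \<le> r}.
                 supn (\<lambda>(s, x). deriv (\<lambda>s'. molli \<psi> i r (sdelta y f) s' x) s) (Pcyl r (t0, x0))))"
        proof (rule SUP_upper2[of 1])
          have "0 \<le> supn (\<lambda>(s, x). deriv (\<lambda>s'. molli \<psi> i 1 (sdelta 0 f) s' x) s) (Pcyl 1 (t0, x0))"
            by (rule supn_nonneg[OF Pcyl_ne[of 1]]) simp
          also have "\<dots> \<le> (SUP y\<in>{y. norm y \<le> 1}.
                   supn (\<lambda>(s, x). deriv (\<lambda>s'. molli \<psi> i 1 (sdelta y f) s' x) s) (Pcyl 1 (t0, x0)))"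
            by (rule SUP_upper) simp
          finally show "0 \<le> ereal (1 powr (1 - 2 * \<alpha>)) * (SUP y\<in>{y. norm y \<le> 1}.
                   supn (\<lambda>(s, x). deriv (\<lambda>s'. molli \<psi> i 1 (sdelta y f) s' x) s) (Pcyl 1 (t0, x0)))" by simp
        qed simp
      qed
      fix A1 A0
      assume T1: "(SUP l\<in>{0<..}. ereal (1 / l powr (2 * \<alpha>)) *
              (SUP y\<in>{y. norm y \<le> l}. INF k\<in>(UNIV :: (real^'n) set).
                 supn (\<lambda>(s, x). grad (sdelta y f s) x - k) (Pcyl l (t0, x0)))) = ereal A1"
        and T0: "(SUP r\<in>{0<..}. ereal (r powr (1 - 2 * \<alpha>)) *
              (SUP y\<in>{y. norm y \<le> r}.
                 supn (\<lambda>(s, x). deriv (\<lambda>s'. moll0 \<psi> r (sdelta y f) s' x) s) (Pcyl r (t0, x0)))) = ereal A0"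
        and A1: "0 \<le> A1" and A0: "0 \<le> A0"
      have SD: "\<And>l \<sigma> a b y. 0 < l \<Longrightarrow> t0 - l\<^sup>2 < \<sigma> \<Longrightarrow> \<sigma> < t0 \<Longrightarrow> dist a x0 < l \<Longrightarrow> dist b x0 < l \<Longrightarrow> norm y \<le> l \<Longrightarrow>
         norm (grad (f \<sigma>) (a + y) - grad (f \<sigma>) a - (grad (f \<sigma>) (b + y) - grad (f \<sigma>) b)) \<le> 2 * A1 * l powr (2*\<alpha>)"
        by (rule SD_from_T1[OF diff]) (use T1 in simp_all)
      have TD: "\<And>\<rho> y \<sigma>. 0 < \<rho> \<Longrightarrow> norm y \<le> \<rho> \<Longrightarrow> t0 - \<rho>\<^sup>2 < \<sigma> \<Longrightarrow> \<sigma> < t0 \<Longrightarrow>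
         \<bar>deriv (\<lambda>s. moll0 \<psi> \<rho> (sdelta y f) s x0) \<sigma>\<bar> \<le> A0 / \<rho> powr (1 - 2*\<alpha>)"
        by (rule TD_from_T0) (use T0 in simp_all)
      show "(SUP r\<in>{0<..}. ereal (1 / r powr (2 * \<alpha>)) *
          (INF Bb\<in>{(B :: real^'n^'n, b :: real^'n). transpose B = B}.
             supn (\<lambda>(s, x). grad (f s) x - (fst Bb *v (x - x0) + snd Bb)) (Pcyl r (t0, x0))))
          \<le> ereal (C * (A0 + A1))"
      proof (rule SUP_least)
        fix r :: real assume "r \<in> {0<..}"
        then have r: "0 < r" by simp
        obtain B b where tB: "transpose B = B"
          and Bb: "\<And>s x. t0 - r\<^sup>2 < s \<Longrightarrow> s < t0 \<Longrightarrow> dist x x0 < r \<Longrightarrow>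
             norm (grad (f s) x - (B *v (x - x0) + b)) \<le> C * (A0 + A1) * r powr (2*\<alpha>)"
          using scale_bound[OF assms(1) r assms(2,3) A0 A1 diff SD mdiff TD] unfolding C_def by blast
        have "(INF Bb\<in>{(B :: real^'n^'n, b :: real^'n). transpose B = B}.
             supn (\<lambda>(s, x). grad (f s) x - (fst Bb *v (x - x0) + snd Bb)) (Pcyl r (t0, x0)))
            \<le> supn (\<lambda>(s, x). grad (f s) x - (fst (B, b) *v (x - x0) + snd (B, b))) (Pcyl r (t0, x0))"
          by (rule INF_lower) (simp add: tB)
        also have "\<dots> \<le> ereal (C * (A0 + A1) * r powr (2*\<alpha>))"
          unfolding supn_def
        proof (rule SUP_least)
          fix p assume p: "p \<in> Pcyl r (t0, x0)"
          obtain s x where px: "p = (s, x)" by (cases p)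
          have "t0 - r\<^sup>2 < s" "s < t0" "dist x x0 < r" using p px by (simp_all add: Pcyl_mem)
          from Bb[OF this] show "ereal (norm ((\<lambda>(s, x). grad (f s) x - (fst (B, b) *v (x - x0) + snd (B, b))) p))
              \<le> ereal (C * (A0 + A1) * r powr (2*\<alpha>))" using px by simp
        qed
        finally have I: "(INF Bb\<in>{(B :: real^'n^'n, b :: real^'n). transpose B = B}.
             supn (\<lambda>(s, x). grad (f s) x - (fst Bb *v (x - x0) + snd Bb)) (Pcyl r (t0, x0)))
            \<le> ereal (C * (A0 + A1) * r powr (2*\<alpha>))" .
        have "ereal (1 / r powr (2 * \<alpha>)) * (INF Bb\<in>{(B :: real^'n^'n, b :: real^'n). transpose B = B}.
             supn (\<lambda>(s, x). grad (f s) x - (fst Bb *v (x - x0) + snd Bb)) (Pcyl r (t0, x0)))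
            \<le> ereal (1 / r powr (2 * \<alpha>)) * ereal (C * (A0 + A1) * r powr (2*\<alpha>))"
          by (rule ereal_mult_left_mono[OF I]) simp
        also have "\<dots> = ereal (C * (A0 + A1))" using r by simp
        finally show "ereal (1 / r powr (2 * \<alpha>)) * (INF Bb\<in>{(B :: real^'n^'n, b :: real^'n). transpose B = B}.
             supn (\<lambda>(s, x). grad (f s) x - (fst Bb *v (x - x0) + snd Bb)) (Pcyl r (t0, x0)))
            \<le> ereal (C * (A0 + A1))" .
      qed
    qed
  qed
qed



end
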